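(* Let $d\ge2$, $0\le p<1$, let $X$ be a finite uniform $d$-complex and consider the $p$-lazy $(d-1)$-walk on $X$ starting at $\sigma_0\in X^{d-1}_\pm$. Then: (1) $A(X,p)=\frac{p(d-1)+1}{d}I-\frac{1-p}{d}\Delta^+$, and $\mathcal E_n^{\sigma_0}=A^n\mathcal E_0^{\sigma_0}=A^n\mathbb 1_{\sigma_0}$ for all $n\ge0$. (2) $\operatorname{Spec}A(X,p)\subseteq\big[2p-1,\frac{p(d-1)+1}{d}\big]$; the value $\frac{p(d-1)+1}{d}$ is an eigenvalue with eigenspace $Z^{d-1}$, and if $X$ is $(d-1)$-connected and disorientable then $2p-1$ is an eigenvalue, attained by $\partial_dF$ where $F\in\Omega^d$ is $1$ on a disorientation $X^d_+$ and $-1$ on the opposite orientations. (3) For all $n\ge0$, $$\frac{1}{\sqrt{K_{d-2}K_{d-1}}}\Big(\frac{p(d-1)+1}{d}\Big)^n\le\|\mathcal E_n^{\sigma_0}\|\le\max\Big(|2p-1|,\frac{p(d-1)+1}{d}\Big)^n,$$ where $K_j$ is the maximal degree of a $j$-cell of $X$ and $\|\cdot\|$ is the norm of the inner product on $\Omega^{d-1}$.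
   Context: A simplicial complex $X$ on a vertex set $V$ is a collection of finite subsets of $V$ (cells), closed under taking subsets (the empty set is a cell). A cell with $j+1$ elements is a $j$-cell; $X^j$ is the set of $j$-cells. $X$ is a $d$-complex if the maximal dimension of a cell is $d$; it is uniform if every cell lies in some $d$-cell. The degree $\deg\sigma$ of a $j$-cell $\sigma$ is the number of $(j+1)$-cells containing it. For $j\ge1$ each $j$-cell has two orientations (orderings of its vertices modulo even permutations), written $[v_0,\dots,v_j]$; $X^j_\pm$ is the set of oriented $j$-cells and $\bar\sigma$ denotes the opposite orientation. The oriented cell $[v_0,\dots,v_j]$ induces on its face $\{v_0,\dots,v_j\}\setminus\{v_i\}$ the orientation $(-1)^i[v_0,\dots,\widehat{v_i},\dots,v_j]$, where a factor $-1$ means reversing the orientation. For $v\notin\sigma$ write $v\triangleleft\sigma$ if $\sigma\cup\{v\}\in X$, and for oriented $\sigma=[\sigma_0,\dots,\sigma_k]$ let $v\sigma=[v,\sigma_0,\dots,\sigma_k]$. The space $\Omega^j=\Omega^j(X)$ of $j$-forms consists of the real functions $f$ on $X^j_\pm$ with $f(\bar\sigma)=-f(\sigma)$. For $\sigma\in X^{d-1}_\pm$, $\mathbb 1_\sigma\in\Omega^{d-1}$ is $1$ on $\sigma$, $-1$ on $\bar\sigma$, $0$ elsewhere. Two oriented $(d-1)$-cells are neighbours, $\sigma\sim\sigma'$, if some oriented $d$-cell $\tau$ has both $\sigma$ and $\overline{\sigma'}$ as faces with the orientations induced by $\tau$ (each $\sigma$ has $d\deg\sigma$ neighbours). Inner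 product on $\Omega^{d-1}$: $\langle f,g\rangle=\sum_{\sigma\in X^{d-1}}f(\sigma)g(\sigma)/\deg\sigma$. Boundary map $\partial_d:\Omega^d\to\Omega^{d-1}$: $(\partial_dF)(\sigma)=\sum_{v\triangleleft\sigma}F(v\sigma)$. Coboundary $\delta_d:\Omega^{d-1}\to\Omega^d$: $(\delta_df)([\tau_0,\dots,\tau_d])=\sum_{i=0}^d(-1)^if([\tau_0,\dots,\widehat{\tau_i},\dots,\tau_d])/\deg(\tau\setminus\tau_i)$. Upper Laplacian $\Delta^+=\partial_d\delta_d$: $(\Delta^+f)(\sigma)=f(\sigma)-\sum_{\sigma'\sim\sigma}f(\sigma')/\deg\sigma'$. Closed forms $Z^{d-1}=\ker\delta_d$. $p$-lazy $(d-1)$-walk ($0\le p<1$): the Markov chain on $X^{d-1}_\pm$ which from $\sigma$ stays at $\sigma$ with probability $p$ and moves to each neighbour $\sigma'\sim\sigma$ with probability $(1-p)/(d\deg\sigma)$. $\mathbf p_n^{\sigma_0}(\sigma)$ is the probability of being at $\sigma$ at time $n$ when starting at $\sigma_0$. Expectation process: $\mathcal E_n^{\sigma_0}\in\Omega^{d-1}$, $\mathcal E_n^{\sigma_0}(\sigma)=\mathbf p_n^{\sigma_0}(\sigma)-\mathbf p_n^{\sigma_0}(\bar\sigma)$. Transition operator $A=A(X,p)$ on $\Omega^{d-1}$: $(Af)(\sigma)=pf(\sigma)+\frac{1-p}{d}\sum_{\sigma'\sim\sigma}f(\sigma')/\deg\sigma'$. $X$ is $(d-1)$-connected if for all $\sigma,\sigma'\in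 X^{d-1}_\pm$ there is a chain $\sigma=\sigma_0\sim\dots\sim\sigma_n=\sigma'$. A disorientation is a choice $X^d_+$ of one orientation of each $d$-cell such that whenever two cells of $X^d_+$ intersect in a $(d-1)$-cell they induce the same orientation on it; $X$ is disorientable if it has one. *)

theory Defs
  imports Complex_Main "HOL-Combinatorics.Permutations"
begin

definition simplicial_complex :: "'a set set \<Rightarrow> bool" where
  "simplicial_complex X \<longleftrightarrow> {} \<in> X \<and> (\<forall>c\<in>X. finite c \<and> (\<forall>b. b \<subseteq> c \<longrightarrow> b \<in> X))"

definition cells :: "'a set set \<Rightarrow> nat \<Rightarrow> 'a set set" where
  "cells X j = {c \<in> X. card c = j + 1}"

definition is_d_complex :: "'a set set \<Rightarrow> nat \<Rightarrow> bool" where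
  "is_d_complex X d \<longleftrightarrow> simplicial_complex X \<and> (\<forall>c\<in>X. card c \<le> d + 1) \<and> cells X d \<noteq> {}"

definition uniform :: "'a set set \<Rightarrow> nat \<Rightarrow> bool" where
  "uniform X d \<longleftrightarrow> (\<forall>c\<in>X. \<exists>t\<in>cells X d. c \<subseteq> t)"

definition deg :: "'a set set \<Rightarrow> 'a set \<Rightarrow> nat" where
  "deg X c = card {t \<in> X. c \<subseteq> t \<and> card t = card c + 1}"

definition maxdeg :: "'a set set \<Rightarrow> nat \<Rightarrow> nat" where
  "maxdeg X j = Max (deg X ` cells X j)"

definition orderings :: "'a set set \<Rightarrow> nat \<Rightarrow> 'a list set" where
  "orderings X j = {xs. distinct xs \<and> length xs = j + 1 \<and> set xs \<in> X}"

text \<open>The orientation [v0,...,vj]: the class of the ordering modulo even permutations.\<close>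
definition oclass :: "'a list \<Rightarrow> 'a list set" where
  "oclass xs = {map q xs | q. q permutes set xs \<and> evenperm q}"

definition ocells :: "'a set set \<Rightarrow> nat \<Rightarrow> 'a list set set" where
  "ocells X j = oclass ` orderings X j"

definition orep :: "'a list set \<Rightarrow> 'a list" where
  "orep S = (SOME xs. xs \<in> S)"

definition ocell :: "'a list set \<Rightarrow> 'a set" where
  "ocell S = set (orep S)"

text \<open>Swapping the first two vertices (an odd permutation).\<close>
fun flip :: "'a list \<Rightarrow> 'a list" where
  "flip (a # b # r) = b # a # r"
| "flip xs = xs"

definition obar :: "'a list set \<Rightarrow> 'a list set" where
  "obar S = oclass (flip (orep S))"

definition del :: "nat \<Rightarrow> 'a list \<Rightarrow> 'a list" where
  "del i xs = take i xs @ drop (Suc i) xs"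

text \<open>Orientation induced by [v0,...,vj] on its face omitting v_i: (-1)^i [v0,..,^vi,..,vj].\<close>
definition ind_face :: "'a list \<Rightarrow> nat \<Rightarrow> 'a list set" where
  "ind_face xs i = (if even i then oclass (del i xs) else obar (oclass (del i xs)))"

definition nbr :: "'a set set \<Rightarrow> nat \<Rightarrow> 'a list set \<Rightarrow> 'a list set \<Rightarrow> bool" where
  "nbr X d S S' \<longleftrightarrow> S \<in> ocells X (d - 1) \<and> S' \<in> ocells X (d - 1) \<and>
     (\<exists>xs \<in> orderings X d. \<exists>i < d + 1. \<exists>k < d + 1. i \<noteq> k \<and>
        ind_face xs i = S \<and> ind_face xs k = obar S')"

text \<open>j-forms (with values in a real vector space; real-valued forms are the case 'b = real,
complex-valued ones are used to speak about the complex spectrum). Forms vanish off X^j_+-.\<close>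
definition forms :: "'a set set \<Rightarrow> nat \<Rightarrow> ('a list set \<Rightarrow> 'b::real_vector) set" where
  "forms X j = {f. (\<forall>S \<in> ocells X j. f (obar S) = - f S) \<and> (\<forall>S. S \<notin> ocells X j \<longrightarrow> f S = 0)}"

definition ind1 :: "'a list set \<Rightarrow> 'a list set \<Rightarrow> real" where
  "ind1 S0 S = (if S = S0 then 1 else if S = obar S0 then -1 else 0)"

definition fnorm :: "'a set set \<Rightarrow> nat \<Rightarrow> ('a list set \<Rightarrow> real) \<Rightarrow> real" where
  "fnorm X d f = sqrt (\<Sum>c \<in> cells X (d - 1).
      (f (oclass (SOME xs. distinct xs \<and> set xs = c)))\<^sup>2 / real (deg X c))"

definition Aop :: "'a set set \<Rightarrow> nat \<Rightarrow> real \<Rightarrow> ('a list set \<Rightarrow> 'b::real_vector) \<Rightarrow> 'a list set \<Rightarrow> 'b" where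
  "Aop X d p f S = (if S \<in> ocells X (d - 1) then
      p *\<^sub>R f S + ((1 - p) / real d) *\<^sub>R
        (\<Sum>S' \<in> {S'. nbr X d S S'}. (1 / real (deg X (ocell S'))) *\<^sub>R f S')
    else 0)"

definition Lup :: "'a set set \<Rightarrow> nat \<Rightarrow> ('a list set \<Rightarrow> real) \<Rightarrow> 'a list set \<Rightarrow> real" where
  "Lup X d f S = (if S \<in> ocells X (d - 1) then
      f S - (\<Sum>S' \<in> {S'. nbr X d S S'}. f S' / real (deg X (ocell S')))
    else 0)"

definition cobdry :: "'a set set \<Rightarrow> nat \<Rightarrow> ('a list set \<Rightarrow> real) \<Rightarrow> 'a list set \<Rightarrow> real" where
  "cobdry X d f T = (if T \<in> ocells X d then
      (\<Sum>i < d + 1. (-1) ^ i * f (oclass (del i (orep T))) / real (deg X (set (del i (orep T)))))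
    else 0)"

definition bdry :: "'a set set \<Rightarrow> nat \<Rightarrow> ('a list set \<Rightarrow> real) \<Rightarrow> 'a list set \<Rightarrow> real" where
  "bdry X d F S = (if S \<in> ocells X (d - 1) then
      (\<Sum>v \<in> {v. v \<notin> ocell S \<and> insert v (ocell S) \<in> X}. F (oclass (v # orep S)))
    else 0)"

definition closed_forms :: "'a set set \<Rightarrow> nat \<Rightarrow> ('a list set \<Rightarrow> real) set" where
  "closed_forms X d = {f \<in> forms X (d - 1). \<forall>T. cobdry X d f T = 0}"

definition connected_d1 :: "'a set set \<Rightarrow> nat \<Rightarrow> bool" where
  "connected_d1 X d \<longleftrightarrow> (\<forall>S \<in> ocells X (d - 1). \<forall>S' \<in> ocells X (d - 1). (nbr X d)\<^sup>*\<^sup>* S S')"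

text \<open>A disorientation: a choice D of one orientation of each d-cell, such that two chosen cells
meeting in a (d-1)-cell induce the same orientation on it.\<close>
definition disorientation :: "'a set set \<Rightarrow> nat \<Rightarrow> 'a list set set \<Rightarrow> bool" where
  "disorientation X d D \<longleftrightarrow> D \<subseteq> ocells X d \<and>
     (\<forall>xs \<in> orderings X d. (oclass xs \<in> D) \<noteq> (oclass (flip xs) \<in> D)) \<and>
     (\<forall>xs \<in> orderings X d. \<forall>ys \<in> orderings X d. oclass xs \<in> D \<longrightarrow> oclass ys \<in> D \<longrightarrow>
        set xs \<noteq> set ys \<longrightarrow> card (set xs \<inter> set ys) = d \<longrightarrow>
        (\<forall>i < d + 1. \<forall>k < d + 1. set (del i xs) = set xs \<inter> set ys \<longrightarrow>
            set (del k ys) = set xs \<inter> set ys \<longrightarrow> ind_face xs i = ind_face ys k))"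

definition disorientable :: "'a set set \<Rightarrow> nat \<Rightarrow> bool" where
  "disorientable X d \<longleftrightarrow> (\<exists>D. disorientation X d D)"

definition disor_form :: "'a set set \<Rightarrow> nat \<Rightarrow> 'a list set set \<Rightarrow> 'a list set \<Rightarrow> real" where
  "disor_form X d D T = (if T \<in> D then 1 else if T \<in> ocells X d then -1 else 0)"

definition trans_prob :: "'a set set \<Rightarrow> nat \<Rightarrow> real \<Rightarrow> 'a list set \<Rightarrow> 'a list set \<Rightarrow> real" where
  "trans_prob X d p S S' = (if S' = S then p
     else if nbr X d S S' then (1 - p) / (real d * real (deg X (ocell S))) else 0)"

fun walk_prob :: "'a set set \<Rightarrow> nat \<Rightarrow> real \<Rightarrow> 'a list set \<Rightarrow> nat \<Rightarrow> 'a list set \<Rightarrow> real" where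
  "walk_prob X d p S0 0 S = (if S = S0 then 1 else 0)"
| "walk_prob X d p S0 (Suc n) S' =
     (\<Sum>S \<in> ocells X (d - 1). walk_prob X d p S0 n S * trans_prob X d p S S')"

definition Eproc :: "'a set set \<Rightarrow> nat \<Rightarrow> real \<Rightarrow> 'a list set \<Rightarrow> nat \<Rightarrow> 'a list set \<Rightarrow> real" where
  "Eproc X d p S0 n S = (if S \<in> ocells X (d - 1)
     then walk_prob X d p S0 n S - walk_prob X d p S0 n (obar S) else 0)"

end

theory Submission
  imports Defs
begin


definition idx :: "'a list \<Rightarrow> 'a \<Rightarrow> nat" where
  "idx xs x = (THE i. i < length xs \<and> xs ! i = x)"

lemma idx: "distinct xs \<Longrightarrow> x \<in> set xs \<Longrightarrow> idx xs x < length xs \<and> xs ! idx xs x = x"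
  unfolding idx_def by (rule theI') (rule distinct_Ex1)

lemma idx_nth: "distinct xs \<Longrightarrow> i < length xs \<Longrightarrow> idx xs (xs!i) = i"
  by (metis idx nth_eq_iff_index_eq nth_mem)

definition pm :: "'a list \<Rightarrow> 'a list \<Rightarrow> 'a \<Rightarrow> 'a" where
  "pm xs ys = (\<lambda>x. if x \<in> set xs then ys ! idx xs x else x)"

lemma pm_map: "distinct xs \<Longrightarrow> length ys = length xs \<Longrightarrow> map (pm xs ys) xs = ys"
  by (auto intro!: nth_equalityI simp: pm_def idx_nth)

lemma pm_permutes:
  assumes "distinct xs" "distinct ys" "set ys = set xs"
  shows "pm xs ys permutes set xs"
proof (rule bij_imp_permutes)
  have len: "length ys = length xs" using assms by (metis distinct_card)
  have m: "map (pm xs ys) xs = ys" using pm_map assms len by blast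
  have "inj_on (pm xs ys) (set xs)"
  proof
    fix x y assume xy: "x \<in> set xs" "y \<in> set xs" "pm xs ys x = pm xs ys y"
    then have "ys ! idx xs x = ys ! idx xs y" by (simp add: pm_def)
    moreover have "idx xs x < length ys" "idx xs y < length ys" using idx[OF assms(1)] xy len by auto
    ultimately have "idx xs x = idx xs y" using assms(2) nth_eq_iff_index_eq by blast
    then show "x = y" using idx[OF assms(1)] xy by metis
  qed
  moreover have "pm xs ys ` set xs = set xs" using m assms(3) by (metis set_map)
  ultimately show "bij_betw (pm xs ys) (set xs) (set xs)" by (simp add: bij_betw_def)
  show "\<And>x. x \<notin> set xs \<Longrightarrow> pm xs ys x = x" by (simp add: pm_def)
qed

lemma perm_unique:
  assumes "q permutes A" "q' permutes A" "set xs = A" "map q xs = map q' xs"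
  shows "q = q'"
proof
  fix x show "q x = q' x"
  proof (cases "x \<in> A")
    case True then show ?thesis using assms(3,4) by (metis map_eq_conv)
  next
    case False then show ?thesis using assms(1,2) by (simp add: permutes_not_in)
  qed
qed

definition po :: "'a list \<Rightarrow> 'a list \<Rightarrow> bool" where
  "po xs ys = evenperm (pm xs ys)"

definition dl :: "'a list \<Rightarrow> 'a list \<Rightarrow> bool" where
  "dl xs ys \<longleftrightarrow> distinct xs \<and> distinct ys \<and> set xs = set ys"

lemma pm_unique:
  assumes "dl xs ys" "q permutes set xs" "map q xs = ys"
  shows "pm xs ys = q"
proof -
  have d: "distinct xs" "distinct ys" "set ys = set xs" using assms(1) by (auto simp: dl_def)
  have p: "pm xs ys permutes set xs" using pm_permutes[OF d] .
  have l: "length ys = length xs" using d by (metis distinct_card)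
  have "map (pm xs ys) xs = map q xs" using pm_map[OF d(1) l] assms(3) by simp
  then show ?thesis using perm_unique[OF p assms(2) refl] by simp
qed

lemma perm_fin: "q permutes set xs \<Longrightarrow> permutation q"
  using permutation_permutes by blast

lemma po_trans:
  assumes "dl xs ys" "dl ys zs"
  shows "po xs zs = (po xs ys = po ys zs)"
proof -
  have p1: "pm xs ys permutes set xs" using assms pm_permutes unfolding dl_def by metis
  have p2: "pm ys zs permutes set xs" using assms pm_permutes unfolding dl_def by metis
  have l1: "length ys = length xs" "length zs = length ys" using assms unfolding dl_def by (metis distinct_card)+
  have "map (pm ys zs \<circ> pm xs ys) xs = zs"
    using pm_map l1 assms unfolding dl_def by (metis map_map)
  then have "pm xs zs = pm ys zs \<circ> pm xs ys"
    using pm_unique[of xs zs] permutes_compose[OF p1 p2] assms unfolding dl_def by metis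
  then show ?thesis unfolding po_def using evenperm_comp perm_fin p1 p2 by metis
qed

lemma po_refl: "distinct xs \<Longrightarrow> po xs xs"
proof -
  assume d: "distinct xs"
  have "pm xs xs = id" by (rule pm_unique) (use d in \<open>auto simp: dl_def permutes_id\<close>)
  then show ?thesis by (simp add: po_def)
qed

lemma dl_sym: "dl xs ys \<Longrightarrow> dl ys xs" by (auto simp: dl_def)
lemma dl_trans: "dl xs ys \<Longrightarrow> dl ys zs \<Longrightarrow> dl xs zs" by (auto simp: dl_def)

lemma po_sym: "dl xs ys \<Longrightarrow> po ys xs = po xs ys"
proof -
  assume d: "dl xs ys"
  have "po xs xs = (po xs ys = po ys xs)" by (rule po_trans[OF d dl_sym[OF d]])
  then show ?thesis using po_refl d unfolding dl_def by auto
qed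

lemma oclass_char:
  assumes "distinct xs"
  shows "ys \<in> oclass xs \<longleftrightarrow> dl xs ys \<and> po xs ys"
proof
  assume "ys \<in> oclass xs"
  then obtain q where q: "ys = map q xs" "q permutes set xs" "evenperm q" unfolding oclass_def by blast
  have "distinct ys" using q assms by (simp add: distinct_map permutes_inj_on)
  moreover have "set ys = set xs" using q by (simp add: permutes_image)
  ultimately have "dl xs ys" using assms by (simp add: dl_def)
  then have "pm xs ys = q" using pm_unique q by metis
  then show "dl xs ys \<and> po xs ys" using q \<open>dl xs ys\<close> by (simp add: po_def)
next
  assume "dl xs ys \<and> po xs ys"
  then have d: "distinct ys" "set ys = set xs" "po xs ys" using assms by (auto simp: dl_def)
  have p: "pm xs ys permutes set xs" using pm_permutes[OF assms d(1,2)] .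
  have l: "length ys = length xs" using d assms by (metis distinct_card)
  have m: "map (pm xs ys) xs = ys" using pm_map[OF assms l] .
  show "ys \<in> oclass xs" unfolding oclass_def mem_Collect_eq
    by (rule exI[of _ "pm xs ys"]) (use p m d(3) in \<open>auto simp: po_def\<close>)
qed

lemma oclass_self: "distinct xs \<Longrightarrow> xs \<in> oclass xs"
  by (simp add: oclass_char po_refl dl_def)

lemma oclass_eq_iff:
  assumes "distinct xs" "distinct ys"
  shows "oclass xs = oclass ys \<longleftrightarrow> set xs = set ys \<and> po xs ys"
proof
  assume "oclass xs = oclass ys"
  then have "xs \<in> oclass ys" using oclass_self assms by metis
  then have "dl ys xs" "po ys xs" using oclass_char assms by auto
  then show "set xs = set ys \<and> po xs ys" using po_sym[of ys xs] by (auto simp: dl_def)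
next
  assume h: "set xs = set ys \<and> po xs ys"
  then have d: "dl xs ys" using assms by (simp add: dl_def)
  show "oclass xs = oclass ys"
  proof (rule set_eqI)
    fix zs show "zs \<in> oclass xs \<longleftrightarrow> zs \<in> oclass ys"
    proof
      assume "zs \<in> oclass xs"
      then have z: "dl xs zs" "po xs zs" using oclass_char assms by auto
      have yz: "dl ys zs" using dl_trans[OF dl_sym[OF d] z(1)] .
      have "po ys zs" using po_trans[OF d yz] z h by simp
      then show "zs \<in> oclass ys" using oclass_char assms yz by auto
    next
      assume "zs \<in> oclass ys"
      then have z: "dl ys zs" "po ys zs" using oclass_char assms by auto
      have "dl xs zs" using dl_trans[OF d z(1)] .
      have "po xs zs" using po_trans[OF d z(1)] z h by simp
      then show "zs \<in> oclass xs" using oclass_char assms \<open>dl xs zs\<close> by auto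
    qed
  qed
qed

lemma map_transpose_po:
  assumes "distinct xs" "a \<in> set xs" "b \<in> set xs" "a \<noteq> b"
  shows "dl xs (map (transpose a b) xs) \<and> \<not> po xs (map (transpose a b) xs)"
proof -
  have p: "transpose a b permutes set xs" using assms by (simp add: permutes_swap_id)
  have d: "dl xs (map (transpose a b) xs)" using p assms
    by (simp add: dl_def distinct_map permutes_inj_on permutes_image)
  then have "pm xs (map (transpose a b) xs) = transpose a b" using pm_unique p by metis
  then show ?thesis using d assms by (simp add: po_def evenperm_swap)
qed

lemma flip_map: "distinct xs \<Longrightarrow> length xs \<ge> 2 \<Longrightarrow> flip xs = map (transpose (xs!0) (xs!1)) xs"
proof -
  assume a: "distinct xs" "length xs \<ge> 2"
  then obtain a b r where x: "xs = a # b # r"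
    by (metis Suc_le_length_iff numeral_2_eq_2)
  then have "a \<notin> set r" "b \<notin> set r" "a \<noteq> b" using a by auto
  then have "map (transpose a b) r = r" by (intro map_idI) (auto simp: transpose_def)
  then show ?thesis using x by (simp add: transpose_def)
qed

lemma flip_po:
  assumes "distinct xs" "length xs \<ge> 2"
  shows "dl xs (flip xs) \<and> \<not> po xs (flip xs)"
proof -
  have "xs!0 \<in> set xs" "xs!1 \<in> set xs" using assms by (auto intro!: nth_mem)
  moreover have l: "0 < length xs" "Suc 0 < length xs" using assms(2) by auto
  moreover have "xs!0 \<noteq> xs!1" using nth_eq_iff_index_eq[OF assms(1) l] by simp
  ultimately show ?thesis using map_transpose_po[OF assms(1)] flip_map[OF assms] by metis
qed

lemma flip_flip: "flip (flip xs) = xs"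
  by (induction xs rule: flip.induct) auto

lemma set_flip: "set (flip xs) = set xs"
  by (induction xs rule: flip.induct) auto

lemma distinct_flip: "distinct (flip xs) = distinct xs"
  by (induction xs rule: flip.induct) auto

lemma length_flip: "length (flip xs) = length xs"
  by (induction xs rule: flip.induct) auto

lemma po_flip2:
  assumes "dl xs ys" "length xs \<ge> 2"
  shows "dl xs (flip ys) \<and> po xs (flip ys) = (\<not> po xs ys)"
proof -
  have l: "length ys \<ge> 2" using assms unfolding dl_def by (metis distinct_card)
  have "dl ys (flip ys)" "\<not> po ys (flip ys)" using flip_po assms(1) l unfolding dl_def by metis+
  then show ?thesis using po_trans[OF assms(1)] dl_trans[OF assms(1)] by metis
qed


lemma po_flip_r: "dl xs ys \<Longrightarrow> length xs \<ge> 2 \<Longrightarrow> dl xs (flip ys) \<and> po xs (flip ys) = (\<not> po xs ys)"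
  using po_flip2 by blast

lemma dl_len: "dl xs ys \<Longrightarrow> length ys = length xs"
  unfolding dl_def by (metis distinct_card)

lemma po_flip_l: "dl xs ys \<Longrightarrow> length xs \<ge> 2 \<Longrightarrow> dl (flip xs) ys \<and> po (flip xs) ys = (\<not> po xs ys)"
proof -
  assume a: "dl xs ys" "length xs \<ge> 2"
  have l: "length ys \<ge> 2" using dl_len[OF a(1)] a(2) by simp
  have "dl ys (flip xs) \<and> po ys (flip xs) = (\<not> po ys xs)" using po_flip_r[OF dl_sym[OF a(1)] l] .
  then show ?thesis using po_sym dl_sym a(1) by metis
qed

lemma po_flip_both: "dl xs ys \<Longrightarrow> length xs \<ge> 2 \<Longrightarrow> dl (flip xs) (flip ys) \<and> po (flip xs) (flip ys) = po xs ys"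
proof -
  assume a: "dl xs ys" "length xs \<ge> 2"
  have 1: "dl (flip xs) ys \<and> po (flip xs) ys = (\<not> po xs ys)" using po_flip_l[OF a] .
  have l: "length (flip xs) \<ge> 2" using a(2) by (simp add: length_flip)
  show ?thesis using po_flip_r[OF conjunct1[OF 1] l] 1 by simp
qed

lemma orep_in: "distinct xs \<Longrightarrow> orep (oclass xs) \<in> oclass xs"
  unfolding orep_def by (rule someI) (rule oclass_self)

lemma orep_props: "distinct xs \<Longrightarrow> dl xs (orep (oclass xs)) \<and> po xs (orep (oclass xs))"
  using orep_in oclass_char by blast

lemma oclass_orep: "distinct xs \<Longrightarrow> oclass (orep (oclass xs)) = oclass xs"
  using orep_props oclass_eq_iff by (metis dl_def)

lemma ocell_oclass: "distinct xs \<Longrightarrow> ocell (oclass xs) = set xs"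
  unfolding ocell_def using orep_props by (metis dl_def)

lemma obar_oclass:
  assumes "distinct xs" "length xs \<ge> 2"
  shows "obar (oclass xs) = oclass (flip xs)"
proof -
  let ?y = "orep (oclass xs)"
  have y: "dl xs ?y" "po xs ?y" using orep_props[OF assms(1)] by auto
  have "dl (flip ?y) (flip xs) \<and> po (flip ?y) (flip xs) = po ?y xs"
    using po_flip_both[OF dl_sym[OF y(1)]] dl_len[OF y(1)] assms(2) by simp
  then have "oclass (flip ?y) = oclass (flip xs)"
    using oclass_eq_iff y po_sym by (metis dl_def)
  then show ?thesis by (simp add: obar_def)
qed

lemma oclass_flip_ne: "distinct xs \<Longrightarrow> length xs \<ge> 2 \<Longrightarrow> oclass (flip xs) \<noteq> oclass xs"
  using flip_po oclass_eq_iff po_sym by (metis dl_def)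

definition sc :: "bool \<Rightarrow> 'a list \<Rightarrow> 'a list set" where
  "sc b xs = (if b then oclass xs else oclass (flip xs))"

lemma sc_eq:
  assumes "dl xs ys" "length xs \<ge> 2"
  shows "(sc b xs = sc b' ys) \<longleftrightarrow> (po xs ys = (b = b'))"
proof -
  have l: "length ys \<ge> 2" using dl_len[OF assms(1)] assms(2) by simp
  have d: "distinct xs" "distinct ys" "distinct (flip xs)" "distinct (flip ys)"
    using assms(1) by (auto simp: dl_def distinct_flip)
  have e1: "oclass xs = oclass ys \<longleftrightarrow> po xs ys" using oclass_eq_iff d assms(1) by (auto simp: dl_def)
  have e2: "oclass (flip xs) = oclass ys \<longleftrightarrow> \<not> po xs ys"
    using oclass_eq_iff[OF d(3) d(2)] po_flip_l[OF assms] by (auto simp: dl_def)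
  have e3: "oclass xs = oclass (flip ys) \<longleftrightarrow> \<not> po xs ys"
    using oclass_eq_iff[OF d(1) d(4)] po_flip_r[OF assms] by (auto simp: dl_def)
  have e4: "oclass (flip xs) = oclass (flip ys) \<longleftrightarrow> po xs ys"
    using oclass_eq_iff[OF d(3) d(4)] po_flip_both[OF assms] by (auto simp: dl_def)
  show ?thesis unfolding sc_def using e1 e2 e3 e4 by auto
qed

lemma sc_oclass: "distinct xs \<Longrightarrow> length xs \<ge> 2 \<Longrightarrow> obar (sc b xs) = sc (\<not> b) xs"
  unfolding sc_def using obar_oclass[of xs] obar_oclass[of "flip xs"]
  by (auto simp: flip_flip distinct_flip length_flip)

lemma ocell_sc: "distinct xs \<Longrightarrow> ocell (sc b xs) = set xs"
  unfolding sc_def by (auto simp: ocell_oclass distinct_flip set_flip)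

lemma sc_True: "sc True xs = oclass xs" by (simp add: sc_def)

lemma two_classes:
  assumes "dl xs ys" "length xs \<ge> 2"
  shows "oclass ys = oclass xs \<or> oclass ys = obar (oclass xs)"
proof -
  have "sc True ys = sc True xs \<or> sc True ys = sc False xs"
    using sc_eq[OF assms, of True True] sc_eq[OF assms, of False True] by (metis (full_types))
  moreover have "obar (oclass xs) = oclass (flip xs)" using obar_oclass assms by (auto simp: dl_def)
  ultimately show ?thesis by (simp add: sc_def)
qed

lemma del_Cons0[simp]: "del 0 (v # s) = s" by (simp add: del_def)
lemma del_ConsS[simp]: "del (Suc i) (v # s) = v # del i s" by (simp add: del_def)

lemma length_del: "i < length xs \<Longrightarrow> length (del i xs) = length xs - 1"
  by (simp add: del_def)

lemma del_alt: "i < length xs \<Longrightarrow> xs = take i xs @ xs ! i # drop (Suc i) xs"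
  by (simp add: id_take_nth_drop)

lemma distinct_del: "distinct xs \<Longrightarrow> distinct (del i xs)"
  unfolding del_def using set_take_disj_set_drop_if_distinct[of xs i "Suc i"] by simp

lemma set_del: "distinct xs \<Longrightarrow> i < length xs \<Longrightarrow> set (del i xs) = set xs - {xs!i}"
proof -
  assume a: "distinct xs" "i < length xs"
  have e: "xs = take i xs @ xs ! i # drop (Suc i) xs" using del_alt a(2) .
  then have "distinct (take i xs @ xs ! i # drop (Suc i) xs)" using a(1) by simp
  then show ?thesis unfolding del_def by (subst (2) e) auto
qed

lemma ind_face_sc:
  assumes "distinct xs" "length xs \<ge> 3" "i < length xs"
  shows "ind_face xs i = sc (even i) (del i xs)"
proof -
  have "distinct (del i xs)" using assms distinct_del by auto
  moreover have "length (del i xs) \<ge> 2" using length_del[OF assms(3)] assms(2) by simp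
  ultimately show ?thesis unfolding ind_face_def sc_def using obar_oclass by auto
qed

lemma move_front:
  "distinct xs \<Longrightarrow> i < length xs \<Longrightarrow> dl xs (xs!i # del i xs) \<and> po xs (xs!i # del i xs) = even i"
proof (induction i arbitrary: xs)
  case 0
  then obtain a r where x: "xs = a # r" by (cases xs) auto
  then show ?case using po_refl[of xs] 0 by (auto simp: dl_def)
next
  case (Suc i)
  obtain as a b bs where e: "xs = as @ a # b # bs" and li: "length as = i"
  proof -
    have "xs = take i xs @ xs!i # xs ! Suc i # drop (Suc (Suc i)) xs" using Suc.prems
      by (metis Cons_nth_drop_Suc Suc_lessD append_take_drop_id)
    then show ?thesis using that Suc.prems by simp
  qed
  have dx: "distinct (as @ a # b # bs)" using Suc.prems(1) e by simp
  let ?ys = "as @ b # a # bs"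
  have tr: "map (transpose a b) xs = ?ys"
  proof -
    have "map (transpose a b) as = as" using dx by (intro map_idI) (auto simp: transpose_def)
    moreover have "map (transpose a b) bs = bs" using dx by (intro map_idI) (auto simp: transpose_def)
    ultimately show ?thesis using e by (simp add: transpose_def)
  qed
  have ab: "a \<in> set xs" "b \<in> set xs" "a \<noteq> b" using dx e by auto
  have py: "dl xs ?ys \<and> \<not> po xs ?ys" using map_transpose_po[OF Suc.prems(1) ab] tr by simp
  have yi: "?ys ! i = b" using li by (simp add: nth_append)
  have xi: "xs ! Suc i = b" using li e by (simp add: nth_append)
  have ydel: "del i ?ys = del (Suc i) xs"
    using li e unfolding del_def by simp
  have dy: "distinct ?ys" "i < length ?ys" using py li by (auto simp: dl_def)
  have IH: "dl ?ys (?ys!i # del i ?ys) \<and> po ?ys (?ys!i # del i ?ys) = even i" using Suc.IH[OF dy] .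
  then have IH': "dl ?ys (b # del (Suc i) xs) \<and> po ?ys (b # del (Suc i) xs) = even i" using yi ydel by simp
  have "po xs (b # del (Suc i) xs) = (po xs ?ys = po ?ys (b # del (Suc i) xs))"
    using po_trans py IH' by blast
  then show ?case using py IH' dl_trans xi by auto
qed

lemma cancel:
  assumes "distinct (v # a)" "distinct (v # b)" "set a = set b"
  shows "po (v # a) (v # b) = po a b"
proof -
  have dab: "dl a b" using assms by (auto simp: dl_def)
  have p: "pm a b permutes set a" by (rule pm_permutes) (use assms in auto)
  have m: "map (pm a b) a = b" using pm_map assms dab dl_len by (metis distinct.simps(2))
  have pv: "pm a b v = v" using assms by (simp add: pm_def)
  have p2: "pm a b permutes set (v # a)" using permutes_subset[OF p] by auto
  have "dl (v#a) (v#b)" using assms by (auto simp: dl_def)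
  then have "pm (v#a) (v#b) = pm a b" using pm_unique[OF _ p2] m pv by simp
  then show ?thesis by (simp add: po_def)
qed


lemma face_po:
  assumes "dl xs ys" "i < length xs" "j < length ys" "xs!i = ys!j"
  shows "dl (del i xs) (del j ys) \<and> po (del i xs) (del j ys) = (even i = (po xs ys = even j))"
proof -
  let ?x = "xs!i"
  have dx: "distinct xs" "distinct ys" using assms by (auto simp: dl_def)
  have A: "dl xs (?x # del i xs)" "po xs (?x # del i xs) = even i" using move_front[OF dx(1) assms(2)] by auto
  have B: "dl ys (?x # del j ys)" "po ys (?x # del j ys) = even j" using move_front[OF dx(2) assms(3)] assms(4) by auto
  have AB: "dl (?x # del i xs) (?x # del j ys)" using dl_trans[OF dl_sym[OF A(1)] dl_trans[OF assms(1) B(1)]] .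
  have 1: "po (?x # del i xs) (?x # del j ys) = (po (?x # del i xs) xs = po xs (?x # del j ys))"
    using po_trans[OF dl_sym[OF A(1)] dl_trans[OF assms(1) B(1)]] .
  have 2: "po xs (?x # del j ys) = (po xs ys = po ys (?x # del j ys))" using po_trans[OF assms(1) B(1)] .
  have 3: "po (?x # del i xs) xs = even i" using po_sym[OF A(1)] A(2) by simp
  have s: "set (del i xs) = set (del j ys)"
  proof -
    have "insert ?x (set (del i xs)) = insert ?x (set (del j ys))" "?x \<notin> set (del i xs)" "?x \<notin> set (del j ys)"
      using AB by (auto simp: dl_def)
    then show ?thesis by (metis Diff_insert_absorb)
  qed
  have 4: "po (?x # del i xs) (?x # del j ys) = po (del i xs) (del j ys)"
    using cancel[OF _ _ s] AB by (auto simp: dl_def)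
  have "dl (del i xs) (del j ys)" using AB s by (auto simp: dl_def)
  moreover have "po (del i xs) (del j ys) = (even i = (po xs ys = even j))"
    by (simp only: 4[symmetric] 1 3 2 B(2))
  ultimately show ?thesis by blast
qed

lemma F1:
  assumes "dl xs ys" "length xs \<ge> 3" "i < length xs" "j < length ys" "xs!i = ys!j"
  shows "ind_face ys j = (if po xs ys then ind_face xs i else obar (ind_face xs i))"
proof -
  have dx: "distinct xs" "distinct ys" using assms by (auto simp: dl_def)
  have ly: "length ys \<ge> 3" using dl_len[OF assms(1)] assms(2) by simp
  have fp: "dl (del i xs) (del j ys)" "po (del i xs) (del j ys) = (even i = (po xs ys = even j))"
    using face_po[OF assms(1,3,4,5)] by auto
  have l2: "length (del i xs) \<ge> 2" using length_del[OF assms(3)] assms(2) by simp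
  have i1: "ind_face xs i = sc (even i) (del i xs)" using ind_face_sc[OF dx(1) assms(2,3)] .
  have i2: "ind_face ys j = sc (even j) (del j ys)" using ind_face_sc[OF dx(2) ly assms(4)] .
  have ob: "obar (ind_face xs i) = sc (\<not> even i) (del i xs)"
    using i1 sc_oclass[OF distinct_del[OF dx(1)] l2] by simp
  have e: "\<And>b b'. (sc b (del i xs) = sc b' (del j ys)) = (po (del i xs) (del j ys) = (b = b'))"
    by (rule sc_eq[OF fp(1) l2])
  show ?thesis
  proof (cases "po xs ys")
    case True
    have "sc (even i) (del i xs) = sc (even j) (del j ys)" using e[of "even i" "even j"] fp(2) True by simp
    then show ?thesis using i1 i2 True by simp
  next
    case False
    have "sc (\<not> even i) (del i xs) = sc (even j) (del j ys)" using e[of "\<not> even i" "even j"] fp(2) False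
      by (cases "even i"; cases "even j") simp_all
    then show ?thesis using ob i2 False by simp
  qed
qed

definition fc :: "'a list \<Rightarrow> 'a \<Rightarrow> 'a list set" where
  "fc xs x = ind_face xs (idx xs x)"

lemma F1fc:
  assumes "dl xs ys" "length xs \<ge> 3" "x \<in> set xs"
  shows "fc ys x = (if po xs ys then fc xs x else obar (fc xs x))"
proof -
  have dx: "distinct xs" "distinct ys" "set xs = set ys" using assms by (auto simp: dl_def)
  show ?thesis unfolding fc_def
    using F1[OF assms(1,2)] idx[OF dx(1) assms(3)] idx[OF dx(2)] assms(3) dx(3) by metis
qed

lemma fc_sc:
  assumes "distinct xs" "length xs \<ge> 3" "x \<in> set xs"
  shows "fc xs x = sc (even (idx xs x)) (del (idx xs x) xs)"
  using ind_face_sc[OF assms(1,2)] idx[OF assms(1,3)] unfolding fc_def by auto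

lemma ocell_fc:
  assumes "distinct xs" "length xs \<ge> 3" "x \<in> set xs"
  shows "ocell (fc xs x) = set xs - {x}"
  using fc_sc[OF assms] ocell_sc[OF distinct_del[OF assms(1)]] set_del[OF assms(1)] idx[OF assms(1,3)] by simp

lemma fc_hd:
  assumes "distinct (v # s)" "length s \<ge> 2"
  shows "fc (v # s) v = oclass s"
proof -
  have "idx (v#s) v = 0" using idx_nth[OF assms(1), of 0] by simp
  then show ?thesis using fc_sc[OF assms(1)] assms(2) by (simp add: sc_def)
qed

lemma fc_second:
  assumes "distinct (a # b # r)" "length r \<ge> 1"
  shows "fc (a # b # r) b = obar (oclass (a # r))"
proof -
  have "idx (a#b#r) b = 1" using idx_nth[OF assms(1), of 1] by simp
  moreover have "distinct (a # r)" "length (a # r) \<ge> 2" using assms by auto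
  moreover have "fc (a # b # r) b = sc (even (idx (a#b#r) b)) (del (idx (a#b#r) b) (a#b#r))"
    using fc_sc[OF assms(1)] assms(2) by simp
  ultimately show ?thesis using obar_oclass[of "a # r"] by (simp add: sc_def del_def)
qed

lemma ocellsE: "S \<in> ocells X j \<Longrightarrow> \<exists>xs\<in>orderings X j. S = oclass xs"
  unfolding ocells_def by auto

lemma oclass_ocells: "xs \<in> orderings X j \<Longrightarrow> oclass xs \<in> ocells X j"
  unfolding ocells_def by auto

lemma orep_ord:
  assumes "S \<in> ocells X j"
  shows "orep S \<in> orderings X j \<and> oclass (orep S) = S"
proof -
  obtain xs where xs: "xs \<in> orderings X j" "S = oclass xs" using ocellsE[OF assms] by blast
  have d: "distinct xs" using xs by (simp add: orderings_def)
  have dd: "dl xs (orep S)" using orep_props d xs by blast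
  then have "orep S \<in> orderings X j" using xs dl_len[OF dd] by (auto simp: orderings_def dl_def)
  then show ?thesis using oclass_orep d xs by simp
qed

lemma ocell_ocells: "S \<in> ocells X j \<Longrightarrow> ocell S \<in> cells X j"
  using orep_ord unfolding ocell_def orderings_def cells_def by (auto simp: distinct_card)

lemma obar_oc:
  assumes "S \<in> ocells X j" "j \<ge> 1"
  shows "obar S \<in> ocells X j \<and> obar (obar S) = S \<and> obar S \<noteq> S \<and> ocell (obar S) = ocell S"
proof -
  obtain xs where xs: "xs \<in> orderings X j" "S = oclass xs" using ocellsE[OF assms(1)] by blast
  have d: "distinct xs" "length xs \<ge> 2" using xs assms(2) by (auto simp: orderings_def)
  have df: "distinct (flip xs)" "length (flip xs) \<ge> 2" using d by (auto simp: distinct_flip length_flip)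
  have o: "obar S = oclass (flip xs)" using obar_oclass d xs by simp
  have fo: "flip xs \<in> orderings X j" using xs by (auto simp: orderings_def distinct_flip length_flip set_flip)
  have "obar S \<in> ocells X j" using o oclass_ocells[OF fo] by simp
  moreover have "obar (obar S) = S" using o obar_oclass[OF df] xs by (simp add: flip_flip)
  moreover have "obar S \<noteq> S" using o xs oclass_flip_ne d by simp
  moreover have "ocell (obar S) = ocell S" using o xs ocell_oclass[OF d(1)] ocell_oclass[OF df(1)] by (simp add: set_flip)
  ultimately show ?thesis by blast
qed

lemma ocell_cases:
  assumes "S \<in> ocells X j" "S' \<in> ocells X j" "j \<ge> 1" "ocell S = ocell S'"
  shows "S' = S \<or> S' = obar S"
proof -
  obtain xs where xs: "xs \<in> orderings X j" "S = oclass xs" using ocellsE[OF assms(1)] by blast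
  obtain ys where ys: "ys \<in> orderings X j" "S' = oclass ys" using ocellsE[OF assms(2)] by blast
  have "dl xs ys" using xs ys assms(4) ocell_oclass by (auto simp: orderings_def dl_def)
  moreover have "length xs \<ge> 2" using xs assms(3) by (auto simp: orderings_def)
  ultimately have "oclass ys = oclass xs \<or> oclass ys = obar (oclass xs)" by (rule two_classes)
  then show ?thesis using xs ys by simp
qed

lemma del_ord:
  assumes "simplicial_complex X" "xs \<in> orderings X j" "i < length xs" "j \<ge> 1"
  shows "del i xs \<in> orderings X (j - 1)"
proof -
  have "set (del i xs) \<subseteq> set xs" unfolding del_def using set_take_subset set_drop_subset by (metis le_supI set_append)
  moreover have "length (del i xs) = j" using length_del[OF assms(3)] assms(2) by (simp add: orderings_def)
  ultimately show ?thesis using assms distinct_del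
    unfolding orderings_def simplicial_complex_def by auto
qed

lemma sc_ocells: "xs \<in> orderings X j \<Longrightarrow> sc b xs \<in> ocells X j"
  unfolding sc_def by (auto intro!: oclass_ocells simp: orderings_def distinct_flip length_flip set_flip)

lemma fc_oc:
  assumes "simplicial_complex X" "xs \<in> orderings X j" "j \<ge> 2" "x \<in> set xs"
  shows "fc xs x \<in> ocells X (j - 1)"
proof -
  have d: "distinct xs" "length xs \<ge> 3" using assms by (auto simp: orderings_def)
  have "del (idx xs x) xs \<in> orderings X (j - 1)" using del_ord[OF assms(1,2)] idx[OF d(1) assms(4)] assms(3) by simp
  then show ?thesis using fc_sc[OF d assms(4)] sc_ocells by metis
qed

definition can :: "'a set \<Rightarrow> 'a list" where
  "can c = (SOME xs. distinct xs \<and> set xs = c)"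

definition pc :: "'a set \<Rightarrow> 'a list set" where
  "pc c = oclass (can c)"

lemma can: "finite c \<Longrightarrow> distinct (can c) \<and> set (can c) = c"
  unfolding can_def by (rule someI_ex) (metis finite_distinct_list)

lemma cells_finite: "simplicial_complex X \<Longrightarrow> c \<in> cells X j \<Longrightarrow> finite c"
  by (auto simp: simplicial_complex_def cells_def)

lemma can_ord: "simplicial_complex X \<Longrightarrow> c \<in> cells X j \<Longrightarrow> can c \<in> orderings X j"
proof -
  assume a: "simplicial_complex X" "c \<in> cells X j"
  have "distinct (can c)" "set (can c) = c" using can cells_finite[OF a] by auto
  then show ?thesis using a(2) distinct_card[of "can c"] unfolding orderings_def cells_def by auto
qed

lemma pc_oc: "simplicial_complex X \<Longrightarrow> c \<in> cells X j \<Longrightarrow> pc c \<in> ocells X j \<and> ocell (pc c) = c"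
proof -
  assume a: "simplicial_complex X" "c \<in> cells X j"
  have "distinct (can c)" "set (can c) = c" using can cells_finite[OF a] by auto
  then show ?thesis using can_ord[OF a] oclass_ocells ocell_oclass unfolding pc_def by metis
qed

lemma oc_pc:
  assumes "simplicial_complex X" "S \<in> ocells X j" "j \<ge> 1"
  shows "S = pc (ocell S) \<or> S = obar (pc (ocell S))"
proof -
  have c: "ocell S \<in> cells X j" using ocell_ocells assms by blast
  have "pc (ocell S) \<in> ocells X j" "ocell (pc (ocell S)) = ocell S" using pc_oc[OF assms(1) c] by auto
  then show ?thesis using ocell_cases[OF _ assms(2,3)] by metis
qed


locale cx =
  fixes X :: "'a set set" and d :: nat
  assumes SC: "simplicial_complex X" and finX: "finite X" and d2: "d \<ge> 2" and unif: "uniform X d"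
begin

abbreviation "OC \<equiv> ocells X (d - 1)"
abbreviation "C \<equiv> cells X (d - 1)"
abbreviation "T \<equiv> cells X d"
abbreviation "N S \<equiv> {S'. nbr X d S S'}"

definition cone :: "'a list \<Rightarrow> 'a set" where
  "cone s = {v. v \<notin> set s \<and> insert v (set s) \<in> X}"

lemma X_finite_el: "c \<in> X \<Longrightarrow> finite c"
  using SC by (auto simp: simplicial_complex_def)

lemma X_sub: "c \<in> X \<Longrightarrow> b \<subseteq> c \<Longrightarrow> b \<in> X"
  using SC by (auto simp: simplicial_complex_def)

lemma ordD: "xs \<in> orderings X j \<Longrightarrow> distinct xs \<and> length xs = Suc j \<and> set xs \<in> X"
  by (simp add: orderings_def)

lemma oc_props: "S \<in> OC \<Longrightarrow> obar S \<in> OC \<and> obar (obar S) = S \<and> obar S \<noteq> S \<and> ocell (obar S) = ocell S"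
proof -
  assume a: "S \<in> OC"
  have "1 \<le> d - 1" using d2 by simp
  then show ?thesis using obar_oc[OF a] by blast
qed

lemma cone_finite: "finite (cone s)"
proof -
  have "cone s \<subseteq> \<Union> X" unfolding cone_def by auto
  moreover have "finite (\<Union> X)" using finX X_finite_el by auto
  ultimately show ?thesis by (rule finite_subset)
qed

lemma cone_card:
  assumes "s \<in> orderings X (d - 1)"
  shows "card (cone s) = deg X (set s)"
proof -
  have fs: "finite (set s)" by simp
  have "bij_betw (\<lambda>v. insert v (set s)) (cone s) {t \<in> X. set s \<subseteq> t \<and> card t = card (set s) + 1}"
  proof (rule bij_betw_byWitness[where f' = "\<lambda>t. the_elem (t - set s)"])
    show "\<forall>a\<in>cone s. the_elem (insert a (set s) - set s) = a" unfolding cone_def by (auto simp: insert_Diff_if)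
    show "(\<lambda>v. insert v (set s)) ` cone s \<subseteq> {t \<in> X. set s \<subseteq> t \<and> card t = card (set s) + 1}"
      unfolding cone_def by auto
    show "\<forall>t\<in>{t \<in> X. set s \<subseteq> t \<and> card t = card (set s) + 1}. insert (the_elem (t - set s)) (set s) = t"
    proof
      fix t assume t: "t \<in> {t \<in> X. set s \<subseteq> t \<and> card t = card (set s) + 1}"
      then have ft: "finite t" using X_finite_el by auto
      have "card (t - set s) = card t - card (set s)" by (rule card_Diff_subset) (use t in auto)
      then have "card (t - set s) = 1" using t by simp
      then obtain v where v: "t - set s = {v}" by (rule card_1_singletonE)
      then have "the_elem (t - set s) = v" by simp
      moreover have "insert v (set s) = t" using v t by blast
      ultimately show "insert (the_elem (t - set s)) (set s) = t" by simp
    qed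
    show "(\<lambda>t. the_elem (t - set s)) ` {t \<in> X. set s \<subseteq> t \<and> card t = card (set s) + 1} \<subseteq> cone s"
    proof
      fix v assume "v \<in> (\<lambda>t. the_elem (t - set s)) ` {t \<in> X. set s \<subseteq> t \<and> card t = card (set s) + 1}"
      then obtain t where t: "t \<in> X" "set s \<subseteq> t" "card t = card (set s) + 1" "v = the_elem (t - set s)" by auto
      then have ft: "finite t" using X_finite_el by auto
      have "card (t - set s) = card t - card (set s)" by (rule card_Diff_subset) (use t in auto)
      then have "card (t - set s) = 1" using t by simp
      then obtain w where w: "t - set s = {w}" by (rule card_1_singletonE)
      then have "v = w" using t by simp
      have "w \<notin> set s" "w \<in> t" using w by auto
      moreover have "insert w (set s) = t" using w t(2) by blast
      ultimately show "v \<in> cone s" using \<open>v = w\<close> t(1) unfolding cone_def by auto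
    qed
  qed
  then show ?thesis unfolding deg_def by (rule bij_betw_same_card)
qed

lemma deg_pos:
  assumes "c \<in> C"
  shows "deg X c > 0"
proof -
  obtain t where t: "t \<in> T" "c \<subseteq> t" using unif assms unfolding uniform_def cells_def by blast
  have "card c = d" using assms d2 by (auto simp: cells_def)
  then have "t \<in> {t \<in> X. c \<subseteq> t \<and> card t = card c + 1}" using t d2 by (auto simp: cells_def)
  moreover have "finite {t \<in> X. c \<subseteq> t \<and> card t = card c + 1}" using finX by simp
  ultimately show ?thesis unfolding deg_def by (metis card_gt_0_iff empty_iff)
qed

lemma sum_TC:
  "(\<Sum>t\<in>T. \<Sum>x\<in>t. h t x) = (\<Sum>c\<in>C. \<Sum>v\<in>{v. v \<notin> c \<and> insert v c \<in> X}. h (insert v c) v)"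
proof -
  have fT: "finite T" using finX by (simp add: cells_def)
  have fC: "finite C" using finX by (simp add: cells_def)
  have fc: "\<And>c. finite {v. v \<notin> c \<and> insert v c \<in> X}"
  proof -
    fix c have "{v. v \<notin> c \<and> insert v c \<in> X} \<subseteq> \<Union> X" by auto
    moreover have "finite (\<Union> X)" using finX X_finite_el by auto
    ultimately show "finite {v. v \<notin> c \<and> insert v c \<in> X}" by (rule finite_subset)
  qed
  have L: "(\<Sum>t\<in>T. \<Sum>x\<in>t. h t x) = (\<Sum>(t,x)\<in>Sigma T (\<lambda>t. t). h t x)"
    using fT X_finite_el by (subst sum.Sigma) (auto simp: cells_def)
  have R: "(\<Sum>c\<in>C. \<Sum>v\<in>{v. v \<notin> c \<and> insert v c \<in> X}. h (insert v c) v)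
      = (\<Sum>(c,v)\<in>Sigma C (\<lambda>c. {v. v \<notin> c \<and> insert v c \<in> X}). h (insert v c) v)"
    using fC fc by (subst sum.Sigma) auto
  have b: "bij_betw (\<lambda>(c,v). (insert v c, v)) (Sigma C (\<lambda>c. {v. v \<notin> c \<and> insert v c \<in> X})) (Sigma T (\<lambda>t. t))"
  proof (rule bij_betw_byWitness[where f' = "\<lambda>(t,x). (t - {x}, x)"])
    show "\<forall>a\<in>Sigma C (\<lambda>c. {v. v \<notin> c \<and> insert v c \<in> X}). (\<lambda>(t, x). (t - {x}, x)) ((\<lambda>(c, v). (insert v c, v)) a) = a"
      by auto
    show "\<forall>a\<in>Sigma T (\<lambda>t. t). (\<lambda>(c, v). (insert v c, v)) ((\<lambda>(t, x). (t - {x}, x)) a) = a"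
      by auto
    show "(\<lambda>(c, v). (insert v c, v)) ` Sigma C (\<lambda>c. {v. v \<notin> c \<and> insert v c \<in> X}) \<subseteq> Sigma T (\<lambda>t. t)"
    proof
      fix p assume "p \<in> (\<lambda>(c, v). (insert v c, v)) ` Sigma C (\<lambda>c. {v. v \<notin> c \<and> insert v c \<in> X})"
      then obtain c v where p: "p = (insert v c, v)" "c \<in> C" "v \<notin> c" "insert v c \<in> X" by auto
      have "finite c" "card c = d" using p X_finite_el d2 by (auto simp: cells_def)
      then have "card (insert v c) = d + 1" using p by simp
      then show "p \<in> Sigma T (\<lambda>t. t)" using p by (auto simp: cells_def)
    qed
    show "(\<lambda>(t, x). (t - {x}, x)) ` Sigma T (\<lambda>t. t) \<subseteq> Sigma C (\<lambda>c. {v. v \<notin> c \<and> insert v c \<in> X})"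
    proof
      fix p assume "p \<in> (\<lambda>(t, x). (t - {x}, x)) ` Sigma T (\<lambda>t. t)"
      then obtain t x where p: "p = (t - {x}, x)" "t \<in> T" "x \<in> t" by auto
      have "finite t" "card t = d + 1" "t \<in> X" using p X_finite_el by (auto simp: cells_def)
      then have "card (t - {x}) = d - 1 + 1" "t - {x} \<in> X" using p d2 X_sub[of t "t - {x}"] by auto
      moreover have "insert x (t - {x}) = t" using p by auto
      ultimately show "p \<in> Sigma C (\<lambda>c. {v. v \<notin> c \<and> insert v c \<in> X})" using p \<open>t \<in> X\<close> by (auto simp: cells_def)
    qed
  qed
  show ?thesis unfolding L R using sum.reindex_bij_betw[OF b, of "\<lambda>(t,x). h t x"]
    by (simp add: case_prod_unfold)
qed

end


context cx begin

lemma d1: "1 \<le> d - 1" using d2 by simp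

lemma ord_cone: "s \<in> orderings X (d - 1) \<Longrightarrow> v \<in> cone s \<Longrightarrow> (v # s) \<in> orderings X d"
  using d2 by (auto simp: orderings_def cone_def)

lemma ord_len: "s \<in> orderings X (d - 1) \<Longrightarrow> length s = d"
  using d2 by (auto simp: orderings_def)

lemma nbr_OC: "nbr X d S S' \<Longrightarrow> S \<in> OC \<and> S' \<in> OC"
  by (simp add: nbr_def)

lemma ind_face_fc: "distinct xs \<Longrightarrow> i < length xs \<Longrightarrow> ind_face xs i = fc xs (xs ! i)"
  by (simp add: fc_def idx_nth)

lemma ocell_nb:
  assumes "s \<in> orderings X (d - 1)" "v \<in> cone s" "x \<in> set s"
  shows "ocell (obar (fc (v#s) x)) = insert v (set s - {x})"
    and "obar (fc (v#s) x) \<in> OC" and "fc (v#s) x \<in> OC"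
proof -
  have o: "v # s \<in> orderings X d" using ord_cone assms by blast
  have fo: "fc (v#s) x \<in> OC" using fc_oc[OF SC o d2] assms by simp
  then show "fc (v#s) x \<in> OC" .
  show "obar (fc (v#s) x) \<in> OC" using oc_props[OF fo] by blast
  have "ocell (fc (v#s) x) = set (v#s) - {x}"
    using ocell_fc[of "v#s" x] o assms d2 by (auto simp: orderings_def)
  then show "ocell (obar (fc (v#s) x)) = insert v (set s - {x})"
    using oc_props[OF fo] assms(2,3) unfolding cone_def by auto
qed

lemma nbr_char:
  assumes s: "s \<in> orderings X (d - 1)"
  shows "N (oclass s) = (\<lambda>(v,x). obar (fc (v#s) x)) ` (cone s \<times> set s)"
proof (rule set_eqI)
  fix S'
  have ds: "distinct s" "length s = d" "set s \<in> X" using s d2 by (auto simp: orderings_def)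
  have soc: "oclass s \<in> OC" using oclass_ocells[OF s] .
  show "S' \<in> N (oclass s) \<longleftrightarrow> S' \<in> (\<lambda>(v,x). obar (fc (v#s) x)) ` (cone s \<times> set s)"
  proof
    assume "S' \<in> N (oclass s)"
    then obtain xs i k where n: "S' \<in> OC" "xs \<in> orderings X d" "i < d + 1" "k < d + 1" "i \<noteq> k"
      "ind_face xs i = oclass s" "ind_face xs k = obar S'"
      unfolding nbr_def by blast
    have dx: "distinct xs" "length xs = d + 1" "set xs \<in> X" using n(2) by (auto simp: orderings_def)
    let ?v = "xs ! i" and ?w = "xs ! k"
    have fv: "fc xs ?v = oclass s" using ind_face_fc[OF dx(1)] n dx by simp
    have fw: "fc xs ?w = obar S'" using ind_face_fc[OF dx(1)] n dx by simp
    have "ocell (fc xs ?v) = set xs - {?v}" using ocell_fc[OF dx(1)] dx n d2 by simp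
    then have ss: "set s = set xs - {?v}" using fv ocell_oclass[OF ds(1)] by simp
    have vi: "?v \<in> set xs" "?w \<in> set xs" using n dx by auto
    have vw: "?v \<noteq> ?w" using nth_eq_iff_index_eq[OF dx(1), of i k] n dx by simp
    have dl1: "dl xs (?v # s)" using ss ds vi by (auto simp: dl_def dx)
    have l3: "length xs \<ge> 3" using dx d2 by simp
    have h: "fc (?v # s) ?v = oclass s" using fc_hd[of ?v s] ds ss d2 by auto
    have e: "fc (?v#s) ?v = (if po xs (?v#s) then fc xs ?v else obar (fc xs ?v))" by (rule F1fc[OF dl1 l3 vi(1)])
    have po: "po xs (?v # s)"
    proof (rule ccontr)
      assume "\<not> po xs (?v # s)"
      then have "oclass s = obar (oclass s)" using e h fv by simp
      then show False using oc_props[OF soc] by simp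
    qed
    have "fc (?v # s) ?w = obar S'" using F1fc[OF dl1 l3 vi(2)] po fw by simp
    then have "S' = obar (fc (?v # s) ?w)" using oc_props[OF n(1)] by simp
    moreover have "?v \<in> cone s"
    proof -
      have "insert ?v (set s) = set xs" using ss vi by auto
      then show ?thesis unfolding cone_def using ss dx(3) by auto
    qed
    moreover have "?w \<in> set s" using ss vi vw by simp
    ultimately show "S' \<in> (\<lambda>(v,x). obar (fc (v#s) x)) ` (cone s \<times> set s)" by auto
  next
    assume "S' \<in> (\<lambda>(v,x). obar (fc (v#s) x)) ` (cone s \<times> set s)"
    then obtain p where p: "p \<in> cone s \<times> set s" "S' = (\<lambda>(v,x). obar (fc (v#s) x)) p" by blast
    obtain v x where vx: "v \<in> cone s" "x \<in> set s" "S' = obar (fc (v#s) x)" using p by (cases p) auto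
    have o: "v # s \<in> orderings X d" using ord_cone s vx by blast
    have dvs: "distinct (v # s)" using o by (simp add: orderings_def)
    have fo: "fc (v#s) x \<in> OC" using ocell_nb[OF s vx(1,2)] by blast
    have S'oc: "S' \<in> OC" using ocell_nb[OF s vx(1,2)] vx by simp
    have ob: "obar S' = fc (v#s) x" using oc_props[OF fo] vx by simp
    let ?k = "idx (v#s) x"
    have k: "?k < length (v#s)" "(v#s) ! ?k = x" using idx[OF dvs] vx by auto
    have k0: "?k \<noteq> 0"
    proof
      assume "?k = 0"
      then have "x = v" using k by simp
      then show False using vx(1,2) by (simp add: cone_def)
    qed
    have i0: "ind_face (v#s) 0 = oclass s" by (simp add: ind_face_def)
    have ik: "ind_face (v#s) ?k = obar S'" using ob by (simp add: fc_def)
    have kk: "?k < d + 1" "(0::nat) < d + 1" using k ds by auto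
    have E: "\<exists>i<d+1. \<exists>k<d+1. i \<noteq> k \<and> ind_face (v#s) i = oclass s \<and> ind_face (v#s) k = obar S'"
      apply (rule exI[of _ 0], rule conjI, simp, rule exI[of _ ?k])
      using i0 ik k0 kk by simp
    have "\<exists>xs\<in>orderings X d. \<exists>i<d+1. \<exists>k<d+1. i \<noteq> k \<and> ind_face xs i = oclass s \<and> ind_face xs k = obar S'"
      using o E by (rule bexI[rotated])
    then show "S' \<in> N (oclass s)" unfolding nbr_def mem_Collect_eq using soc S'oc by simp
  qed
qed

lemma nbr_inj:
  assumes s: "s \<in> orderings X (d - 1)"
  shows "inj_on (\<lambda>(v,x). obar (fc (v#s) x)) (cone s \<times> set s)"
proof (rule inj_onI)
  fix p q assume p: "p \<in> cone s \<times> set s" and q: "q \<in> cone s \<times> set s"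
    and e: "(\<lambda>(v,x). obar (fc (v#s) x)) p = (\<lambda>(v,x). obar (fc (v#s) x)) q"
  obtain v x where pv: "p = (v,x)" "v \<in> cone s" "x \<in> set s" using p by auto
  obtain w y where qw: "q = (w,y)" "w \<in> cone s" "y \<in> set s" using q by auto
  have e': "insert v (set s - {x}) = insert w (set s - {y})"
    using ocell_nb(1)[OF s pv(2,3)] ocell_nb(1)[OF s qw(2,3)] e pv qw by simp
  have nv: "v \<notin> set s" "w \<notin> set s" using pv qw by (auto simp: cone_def)
  have "v \<in> insert w (set s - {y})" using e' by blast
  then have vw: "v = w" using nv by blast
  then have "set s - {x} = set s - {y}" using e' nv insert_ident[of v "set s - {x}" "set s - {y}"] by simp
  then have "x = y" using pv qw by blast
  then show "p = q" using pv qw vw by simp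
qed

lemma sum_N:
  assumes s: "s \<in> orderings X (d - 1)"
  shows "(\<Sum>S'\<in>N (oclass s). \<phi> S') = (\<Sum>v\<in>cone s. \<Sum>x\<in>set s. \<phi> (obar (fc (v#s) x)))"
proof -
  have "(\<Sum>S'\<in>N (oclass s). \<phi> S') = (\<Sum>p\<in>cone s \<times> set s. \<phi> ((\<lambda>(v,x). obar (fc (v#s) x)) p))"
    unfolding nbr_char[OF s] by (rule sum.reindex[OF nbr_inj[OF s], unfolded comp_def])
  also have "\<dots> = (\<Sum>v\<in>cone s. \<Sum>x\<in>set s. \<phi> (obar (fc (v#s) x)))"
    using sum.cartesian_product[of "\<lambda>v x. \<phi> (obar (fc (v#s) x))" "set s" "cone s"] by (simp add: case_prod_unfold)
  finally show ?thesis .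
qed

lemma N_finite: "finite (N S)"
proof (cases "S \<in> OC")
  case True
  then obtain s where s: "s \<in> orderings X (d - 1)" "S = oclass s" using ocellsE by blast
  show ?thesis unfolding s(2) nbr_char[OF s(1)] using cone_finite by simp
next
  case False
  then have "N S = {}" using nbr_OC by blast
  then show ?thesis by simp
qed

lemma nbr_sym:
  assumes "nbr X d S S'"
  shows "nbr X d S' S \<and> nbr X d (obar S) (obar S')"
proof -
  obtain xs i k where n: "S \<in> OC" "S' \<in> OC" "xs \<in> orderings X d" "i < d + 1" "k < d + 1" "i \<noteq> k"
      "ind_face xs i = S" "ind_face xs k = obar S'"
    using assms unfolding nbr_def by blast
  have dx: "distinct xs" "length xs = d + 1" "set xs \<in> X" using n(3) by (auto simp: orderings_def)
  let ?ys = "flip xs"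
  have ys: "?ys \<in> orderings X d" using n(3) by (auto simp: orderings_def distinct_flip length_flip set_flip)
  have dy: "distinct ?ys" "length ?ys = d + 1" "set ?ys = set xs" using ys dx by (auto simp: orderings_def set_flip)
  have l3: "length xs \<ge> 3" "length xs \<ge> 2" using dx d2 by auto
  have fp: "dl xs ?ys" "\<not> po xs ?ys" using flip_po[OF dx(1) l3(2)] by auto
  let ?v = "xs ! i" and ?w = "xs ! k"
  have vi: "?v \<in> set xs" "?w \<in> set xs" using n dx by auto
  have vw: "?v \<noteq> ?w" using nth_eq_iff_index_eq[OF dx(1), of i k] n dx by simp
  have fv: "fc xs ?v = S" "fc xs ?w = obar S'" using ind_face_fc[OF dx(1)] n dx by auto
  have gv: "fc ?ys ?v = obar S" "fc ?ys ?w = S'"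
    using F1fc[OF fp(1) l3(1)] vi fp(2) fv oc_props[OF n(2)] by auto
  let ?i = "idx ?ys ?v" and ?k = "idx ?ys ?w"
  have ii: "?i < d + 1" "?ys ! ?i = ?v" "?k < d + 1" "?ys ! ?k = ?w"
    using idx[OF dy(1)] vi dy by auto
  have ik: "?i \<noteq> ?k" using ii vw by metis
  have if1: "ind_face ?ys ?i = obar S" "ind_face ?ys ?k = S'" using gv by (auto simp: fc_def)
  have o1: "obar S \<in> OC" "obar S' \<in> OC" "obar (obar S') = S'" using oc_props n by auto
  have E1: "\<exists>i<d+1. \<exists>k<d+1. i \<noteq> k \<and> ind_face ?ys i = S' \<and> ind_face ?ys k = obar S"
    apply (rule exI[of _ ?k], rule conjI, rule ii(3), rule exI[of _ ?i])
    using ii ik if1 by simp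
  have E2: "\<exists>i<d+1. \<exists>k<d+1. i \<noteq> k \<and> ind_face ?ys i = obar S \<and> ind_face ?ys k = obar (obar S')"
    apply (rule exI[of _ ?i], rule conjI, rule ii(1), rule exI[of _ ?k])
    using ii ik if1 o1 by simp
  have B1: "\<exists>xs\<in>orderings X d. \<exists>i<d+1. \<exists>k<d+1. i \<noteq> k \<and> ind_face xs i = S' \<and> ind_face xs k = obar S"
    using ys E1 by (rule bexI[rotated])
  have B2: "\<exists>xs\<in>orderings X d. \<exists>i<d+1. \<exists>k<d+1. i \<noteq> k \<and> ind_face xs i = obar S \<and> ind_face xs k = obar (obar S')"
    using ys E2 by (rule bexI[rotated])
  have "nbr X d S' S" unfolding nbr_def using n(1,2) B1 by simp
  moreover have "nbr X d (obar S) (obar S')" unfolding nbr_def using o1 B2 by simp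
  ultimately show ?thesis by simp
qed

lemma N_obar:
  assumes "S \<in> OC"
  shows "N (obar S) = obar ` N S"
proof (rule set_eqI)
  fix S'' show "S'' \<in> N (obar S) \<longleftrightarrow> S'' \<in> obar ` N S"
  proof
    assume h: "S'' \<in> N (obar S)"
    then have "nbr X d (obar (obar S)) (obar S'')" using nbr_sym by simp
    then have "nbr X d S (obar S'')" using oc_props[OF assms] by simp
    moreover have "S'' \<in> OC" using h nbr_OC by simp
    ultimately have a: "obar S'' \<in> N S" and b: "S'' = obar (obar S'')" using oc_props by auto
    show "S'' \<in> obar ` N S" using image_eqI[where f=obar, OF b a] .
  next
    assume "S'' \<in> obar ` N S"
    then obtain S1 where "nbr X d S S1" "S'' = obar S1" by auto
    then show "S'' \<in> N (obar S)" using nbr_sym by simp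
  qed
qed

end


lemma sq_sum_le:
  fixes a :: "'b \<Rightarrow> real"
  assumes "finite A"
  shows "(\<Sum>x\<in>A. a x)^2 \<le> real (card A) * (\<Sum>x\<in>A. (a x)^2)"
proof -
  have "0 \<le> (\<Sum>x\<in>A. \<Sum>y\<in>A. (a x - a y)^2)" by (intro sum_nonneg) auto
  also have "(\<Sum>x\<in>A. \<Sum>y\<in>A. (a x - a y)^2) = (\<Sum>x\<in>A. \<Sum>y\<in>A. ((a x)^2 + (a y)^2 - 2 * a x * a y))"
    by (simp add: power2_diff)
  also have "\<dots> = (\<Sum>x\<in>A. real (card A) * (a x)^2 + (\<Sum>y\<in>A. (a y)^2) - 2 * a x * (\<Sum>y\<in>A. a y))"
    by (simp add: sum.distrib sum_subtractf sum_distrib_left)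
  also have "\<dots> = 2 * real (card A) * (\<Sum>x\<in>A. (a x)^2) - 2 * (\<Sum>x\<in>A. a x)^2"
    by (simp add: sum.distrib sum_subtractf sum_distrib_left sum_distrib_right power2_eq_square algebra_simps)
  finally show ?thesis by simp
qed

context cx begin

definition ip :: "('a list set \<Rightarrow> real) \<Rightarrow> ('a list set \<Rightarrow> real) \<Rightarrow> real" where
  "ip f g = (\<Sum>c\<in>C. f (pc c) * g (pc c) / real (deg X c))"

definition M :: "('a list set \<Rightarrow> real) \<Rightarrow> 'a list set \<Rightarrow> real" where
  "M f S = (\<Sum>S'\<in>N S. f S' / real (deg X (ocell S')))"

definition B :: "('a list set \<Rightarrow> real) \<Rightarrow> ('a list set \<Rightarrow> real) \<Rightarrow> real" where
  "B f g = (\<Sum>t\<in>T. cobdry X d f (pc t) * cobdry X d g (pc t))"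

lemma form_obar: "f \<in> forms X (d - 1) \<Longrightarrow> S \<in> OC \<Longrightarrow> f (obar S) = - f S"
  by (simp add: forms_def)

lemma form_out: "f \<in> forms X (d - 1) \<Longrightarrow> S \<notin> OC \<Longrightarrow> f S = 0"
  by (simp add: forms_def)

lemma form_pc:
  fixes f g :: "'a list set \<Rightarrow> real"
  assumes "f \<in> forms X (d - 1)" "g \<in> forms X (d - 1)" "S \<in> OC"
  shows "f S * g S = f (pc (ocell S)) * g (pc (ocell S))"
proof -
  have c: "ocell S \<in> C" using ocell_ocells assms by blast
  have p: "pc (ocell S) \<in> OC" using pc_oc[OF SC c] by blast
  have fo: "f (obar (pc (ocell S))) = - f (pc (ocell S))" "g (obar (pc (ocell S))) = - g (pc (ocell S))"
    using form_obar[OF assms(1) p] form_obar[OF assms(2) p] by auto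
  show ?thesis using oc_pc[OF SC assms(3) d1]
  proof
    assume "S = obar (pc (ocell S))"
    then have "f S = - f (pc (ocell S))" "g S = - g (pc (ocell S))" using fo by metis+
    then show ?thesis by simp
  qed simp
qed

lemma Aop_real:
  "Aop X d p (f :: 'a list set \<Rightarrow> real) S = (if S \<in> OC then p * f S + (1 - p) / real d * M f S else 0)"
  unfolding Aop_def M_def by simp

lemma Lup_M: "Lup X d f S = (if S \<in> OC then f S - M f S else 0)"
  unfolding Lup_def M_def by simp

lemma COB:
  fixes f :: "'a list set \<Rightarrow> real"
  assumes ys: "ys \<in> orderings X d" and f: "f \<in> forms X (d - 1)"
  shows "cobdry X d f (oclass ys) = (\<Sum>x\<in>set ys. f (fc ys x) / real (deg X (set ys - {x})))"
proof -
  let ?T = "oclass ys"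
  have Toc: "?T \<in> ocells X d" using oclass_ocells[OF ys] .
  let ?zs = "orep ?T"
  have dy: "distinct ys" "length ys = d + 1" using ys by (auto simp: orderings_def)
  have zs: "?zs \<in> orderings X d" using orep_ord[OF Toc] by blast
  have dz: "distinct ?zs" "length ?zs = d + 1" using zs by (auto simp: orderings_def)
  have pz: "dl ys ?zs" "po ys ?zs" using orep_props[OF dy(1)] by auto
  have l3: "length ys \<ge> 3" using dy d2 by simp
  have tm: "(-1)^i * f (oclass (del i ?zs)) / real (deg X (set (del i ?zs)))
      = f (fc ?zs (?zs ! i)) / real (deg X (set ?zs - {?zs ! i}))" if i: "i < d + 1" for i
  proof -
    have "del i ?zs \<in> orderings X (d - 1)" using del_ord[OF SC zs] i dz d2 by simp
    then have o: "oclass (del i ?zs) \<in> OC" using oclass_ocells by blast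
    have "ind_face ?zs i = (if even i then oclass (del i ?zs) else obar (oclass (del i ?zs)))"
      by (simp add: ind_face_def)
    then have "f (ind_face ?zs i) = (-1)^i * f (oclass (del i ?zs))"
      using form_obar[OF f o] by auto
    moreover have "ind_face ?zs i = fc ?zs (?zs ! i)" using ind_face_fc[OF dz(1)] i dz by simp
    moreover have "set (del i ?zs) = set ?zs - {?zs ! i}" using set_del[OF dz(1)] i dz by simp
    ultimately show ?thesis by simp
  qed
  have "cobdry X d f ?T = (\<Sum>i<d+1. (-1)^i * f (oclass (del i ?zs)) / real (deg X (set (del i ?zs))))"
    using Toc by (simp add: cobdry_def)
  also have "\<dots> = (\<Sum>i<d+1. f (fc ?zs (?zs ! i)) / real (deg X (set ?zs - {?zs ! i})))"
    using tm by (intro sum.cong) auto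
  also have "\<dots> = (\<Sum>x\<in>set ?zs. f (fc ?zs x) / real (deg X (set ?zs - {x})))"
    using sum.reindex_bij_betw[OF bij_betw_nth[OF dz(1) refl refl], of "\<lambda>x. f (fc ?zs x) / real (deg X (set ?zs - {x}))"]
      dz by simp
  also have "\<dots> = (\<Sum>x\<in>set ys. f (fc ys x) / real (deg X (set ys - {x})))"
  proof -
    have s: "set ?zs = set ys" using pz by (simp add: dl_def)
    have "fc ?zs x = fc ys x" if "x \<in> set ys" for x using F1fc[OF pz(1) l3 that] pz(2) by simp
    then show ?thesis using s by (intro sum.cong) auto
  qed
  finally show ?thesis .
qed

lemma COB_sign:
  fixes f :: "'a list set \<Rightarrow> real"
  assumes ys: "ys \<in> orderings X d" and zs: "zs \<in> orderings X d" and s: "set ys = set zs"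
    and f: "f \<in> forms X (d - 1)"
  shows "cobdry X d f (oclass zs) = (if po ys zs then cobdry X d f (oclass ys) else - cobdry X d f (oclass ys))"
proof -
  have dy: "distinct ys" "length ys = d + 1" using ys by (auto simp: orderings_def)
  have dz: "distinct zs" using zs by (auto simp: orderings_def)
  have dl: "dl ys zs" using dy dz s by (simp add: dl_def)
  have l3: "length ys \<ge> 3" using dy d2 by simp
  have "f (fc zs x) = (if po ys zs then f (fc ys x) else - f (fc ys x))" if x: "x \<in> set ys" for x
  proof -
    have "fc ys x \<in> OC" using fc_oc[OF SC ys d2 x] by simp
    then show ?thesis using F1fc[OF dl l3 x] form_obar[OF f] by simp
  qed
  then have "(\<Sum>x\<in>set zs. f (fc zs x) / real (deg X (set zs - {x})))
     = (if po ys zs then (\<Sum>x\<in>set ys. f (fc ys x) / real (deg X (set ys - {x})))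
        else - (\<Sum>x\<in>set ys. f (fc ys x) / real (deg X (set ys - {x}))))"
    using s by (auto simp: sum_negf[symmetric] intro!: sum.cong)
  then show ?thesis using COB[OF ys f] COB[OF zs f] by simp
qed

end


context cx begin

lemma can_T: "t \<in> T \<Longrightarrow> can t \<in> orderings X d \<and> set (can t) = t"
  using can_ord[OF SC] can cells_finite[OF SC] by blast

lemma can_C: "c \<in> C \<Longrightarrow> can c \<in> orderings X (d - 1) \<and> set (can c) = c"
  using can_ord[OF SC] can cells_finite[OF SC] by blast

lemma cone_can: "c \<in> C \<Longrightarrow> cone (can c) = {v. v \<notin> c \<and> insert v c \<in> X}"
  using can_C unfolding cone_def by simp

lemma Hterm:
  fixes f g :: "'a list set \<Rightarrow> real"
  assumes f: "f \<in> forms X (d - 1)" and g: "g \<in> forms X (d - 1)"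
    and c: "c \<in> C" and v: "v \<in> cone (can c)"
  shows "g (fc (can (insert v c)) v) * cobdry X d f (pc (insert v c))
       = g (pc c) * cobdry X d f (oclass (v # can c))"
proof -
  let ?s = "can c" and ?t = "insert v c"
  have s: "?s \<in> orderings X (d - 1)" "set ?s = c" using can_C[OF c] by auto
  have ys: "v # ?s \<in> orderings X d" using ord_cone[OF s(1) v] .
  have vc: "v \<notin> c" "?t \<in> X" using v s(2) by (auto simp: cone_def)
  have fc_: "finite c" using c cells_finite[OF SC] by blast
  have ct: "card c = d" using c d2 by (simp add: cells_def)
  have tT: "?t \<in> T" using vc fc_ ct by (simp add: cells_def)
  have yt: "can ?t \<in> orderings X d" "set (can ?t) = ?t" using can_T[OF tT] by auto
  have st: "set (v # ?s) = set (can ?t)" using yt s by simp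
  have dys: "distinct (v # ?s)" "length (v # ?s) = d + 1" using ys by (auto simp: orderings_def)
  have dl: "dl (v # ?s) (can ?t)" using dys yt st by (simp add: dl_def orderings_def)
  have l3: "length (v # ?s) \<ge> 3" using dys d2 by simp
  have F: "fc (can ?t) v = (if po (v # ?s) (can ?t) then fc (v # ?s) v else obar (fc (v # ?s) v))"
    using F1fc[OF dl l3] by simp
  have Cs: "cobdry X d f (oclass (can ?t)) = (if po (v # ?s) (can ?t) then cobdry X d f (oclass (v # ?s))
      else - cobdry X d f (oclass (v # ?s)))"
    using COB_sign[OF ys yt(1) st f] .
  have hd: "fc (v # ?s) v = oclass ?s" using fc_hd[of v ?s] dys d2 by simp
  have soc: "oclass ?s \<in> OC" using oclass_ocells[OF s(1)] .
  have gob: "g (obar (oclass ?s)) = - g (oclass ?s)" using form_obar[OF g soc] .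
  show ?thesis using F Cs hd gob by (simp add: pc_def)
qed

lemma Sv:
  fixes f :: "'a list set \<Rightarrow> real"
  assumes f: "f \<in> forms X (d - 1)" and c: "c \<in> C"
  shows "(\<Sum>v\<in>cone (can c). cobdry X d f (oclass (v # can c))) = f (pc c) - M f (pc c)"
proof -
  let ?s = "can c"
  have s: "?s \<in> orderings X (d - 1)" "set ?s = c" using can_C[OF c] by auto
  have ds: "distinct ?s" "length ?s = d" using s(1) d2 by (auto simp: orderings_def)
  have one: "cobdry X d f (oclass (v # ?s)) = f (pc c) / real (deg X c)
      - (\<Sum>x\<in>set ?s. f (obar (fc (v # ?s) x)) / real (deg X (ocell (obar (fc (v # ?s) x)))))"
    if v: "v \<in> cone ?s" for v
  proof -
    have ys: "v # ?s \<in> orderings X d" using ord_cone[OF s(1) v] .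
    have vs: "v \<notin> set ?s" using v by (simp add: cone_def)
    have "cobdry X d f (oclass (v # ?s)) = (\<Sum>x\<in>insert v (set ?s). f (fc (v # ?s) x) / real (deg X (insert v (set ?s) - {x})))"
      using COB[OF ys f] by simp
    also have "\<dots> = f (fc (v # ?s) v) / real (deg X (insert v (set ?s) - {v}))
        + (\<Sum>x\<in>set ?s. f (fc (v # ?s) x) / real (deg X (insert v (set ?s) - {x})))"
      using vs by (simp add: sum.insert)
    also have "f (fc (v # ?s) v) / real (deg X (insert v (set ?s) - {v})) = f (pc c) / real (deg X c)"
      using fc_hd[of v ?s] vs ds s d2 by (simp add: pc_def)
    also have "(\<Sum>x\<in>set ?s. f (fc (v # ?s) x) / real (deg X (insert v (set ?s) - {x})))
        = - (\<Sum>x\<in>set ?s. f (obar (fc (v # ?s) x)) / real (deg X (ocell (obar (fc (v # ?s) x)))))"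
    proof -
      have "f (fc (v # ?s) x) / real (deg X (insert v (set ?s) - {x}))
          = - (f (obar (fc (v # ?s) x)) / real (deg X (ocell (obar (fc (v # ?s) x)))))"
        if x: "x \<in> set ?s" for x
      proof -
        have o: "fc (v # ?s) x \<in> OC" using ocell_nb[OF s(1) v x] by blast
        have "ocell (obar (fc (v # ?s) x)) = insert v (set ?s) - {x}" using ocell_nb(1)[OF s(1) v x] vs x by auto
        then show ?thesis using form_obar[OF f o] by simp
      qed
      then show ?thesis by (simp add: sum_negf[symmetric])
    qed
    finally show ?thesis by simp
  qed
  have "(\<Sum>v\<in>cone ?s. cobdry X d f (oclass (v # ?s)))
      = (\<Sum>v\<in>cone ?s. f (pc c) / real (deg X c))
        - (\<Sum>v\<in>cone ?s. \<Sum>x\<in>set ?s. f (obar (fc (v # ?s) x)) / real (deg X (ocell (obar (fc (v # ?s) x)))))"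
    using one by (simp add: sum_subtractf)
  also have "(\<Sum>v\<in>cone ?s. f (pc c) / real (deg X c)) = f (pc c)"
    using cone_card[OF s(1)] deg_pos[OF c] s by simp
  also have "(\<Sum>v\<in>cone ?s. \<Sum>x\<in>set ?s. f (obar (fc (v # ?s) x)) / real (deg X (ocell (obar (fc (v # ?s) x)))))
      = M f (pc c)"
    unfolding M_def pc_def using sum_N[OF s(1), of "\<lambda>S'. f S' / real (deg X (ocell S'))"] by simp
  finally show ?thesis .
qed

lemma K:
  fixes f g :: "'a list set \<Rightarrow> real"
  assumes f: "f \<in> forms X (d - 1)" and g: "g \<in> forms X (d - 1)"
  shows "B f g = ip (Lup X d f) g"
proof -
  define H where "H t x = g (fc (can t) x) * cobdry X d f (pc t) / real (deg X (t - {x}))" for t x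
  have "B f g = (\<Sum>t\<in>T. \<Sum>x\<in>t. H t x)"
    unfolding B_def
  proof (rule sum.cong[OF refl])
    fix t assume t: "t \<in> T"
    have "cobdry X d g (pc t) = (\<Sum>x\<in>t. g (fc (can t) x) / real (deg X (t - {x})))"
      using COB[OF conjunct1[OF can_T[OF t]] g] can_T[OF t] by (simp add: pc_def)
    then show "cobdry X d f (pc t) * cobdry X d g (pc t) = (\<Sum>x\<in>t. H t x)"
      unfolding H_def by (simp add: sum_distrib_left mult.commute)
  qed
  also have "\<dots> = (\<Sum>c\<in>C. \<Sum>v\<in>{v. v \<notin> c \<and> insert v c \<in> X}. H (insert v c) v)"
    by (rule sum_TC)
  also have "\<dots> = (\<Sum>c\<in>C. g (pc c) / real (deg X c) * (\<Sum>v\<in>cone (can c). cobdry X d f (oclass (v # can c))))"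
  proof (rule sum.cong[OF refl])
    fix c assume c: "c \<in> C"
    have "H (insert v c) v = g (pc c) / real (deg X c) * cobdry X d f (oclass (v # can c))"
      if v: "v \<in> cone (can c)" for v
    proof -
      have "insert v c - {v} = c" using v can_C[OF c] by (auto simp: cone_def)
      then show ?thesis unfolding H_def using Hterm[OF f g c v] by simp
    qed
    then show "(\<Sum>v\<in>{v. v \<notin> c \<and> insert v c \<in> X}. H (insert v c) v)
        = g (pc c) / real (deg X c) * (\<Sum>v\<in>cone (can c). cobdry X d f (oclass (v # can c)))"
      unfolding cone_can[OF c, symmetric] by (simp add: sum_distrib_left)
  qed
  also have "\<dots> = (\<Sum>c\<in>C. g (pc c) / real (deg X c) * (f (pc c) - M f (pc c)))"
    using Sv[OF f] by simp
  also have "\<dots> = ip (Lup X d f) g"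
    unfolding ip_def using pc_oc[OF SC] by (intro sum.cong) (auto simp: Lup_M)
  finally show ?thesis .
qed

end


context cx begin

lemma forms_lin:
  fixes f g :: "'a list set \<Rightarrow> real"
  shows "f \<in> forms X (d - 1) \<Longrightarrow> g \<in> forms X (d - 1) \<Longrightarrow> (\<lambda>S. a * f S + b * g S) \<in> forms X (d - 1)"
  by (simp add: forms_def)

lemma M_lin:
  fixes f g :: "'a list set \<Rightarrow> real"
  shows "M (\<lambda>S. a * f S + b * g S) S = a * M f S + b * M g S"
  unfolding M_def by (simp add: sum.distrib sum_distrib_left add_divide_distrib)

lemma Aop_lin:
  fixes f g :: "'a list set \<Rightarrow> real"
  shows "Aop X d p (\<lambda>S. a * f S + b * g S) = (\<lambda>S. a * Aop X d p f S + b * Aop X d p g S)"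
  by (rule ext) (simp add: Aop_real M_lin algebra_simps)

lemma Lup_lin:
  fixes f g :: "'a list set \<Rightarrow> real"
  shows "Lup X d (\<lambda>S. a * f S + b * g S) = (\<lambda>S. a * Lup X d f S + b * Lup X d g S)"
  by (rule ext) (simp add: Lup_M M_lin algebra_simps)

lemma ip_lin: "ip (\<lambda>S. a * f S + b * g S) h = a * ip f h + b * ip g h"
  unfolding ip_def by (simp add: sum.distrib sum_distrib_left algebra_simps add_divide_distrib)

lemma ip_sym: "ip f g = ip g f"
  unfolding ip_def by (simp add: mult.commute)

lemma ip_nonneg: "ip f f \<ge> 0"
  unfolding ip_def by (intro sum_nonneg) auto

lemma finC: "finite C" using finX by (simp add: cells_def)
lemma finT: "finite T" using finX by (simp add: cells_def)

lemma ip_zero: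
  fixes f :: "'a list set \<Rightarrow> real"
  assumes f: "f \<in> forms X (d - 1)" and z: "ip f f = 0"
  shows "f = (\<lambda>_. 0)"
proof
  fix S
  have "\<forall>c\<in>C. f (pc c) * f (pc c) / real (deg X c) = 0"
    using z sum_nonneg_eq_0_iff[OF finC, of "\<lambda>c. f (pc c) * f (pc c) / real (deg X c)"]
    unfolding ip_def by auto
  have z2: "\<forall>c\<in>C. f (pc c) = 0"
  proof
    fix c assume c: "c \<in> C"
    then have "f (pc c) * f (pc c) / real (deg X c) = 0" using \<open>\<forall>c\<in>C. _\<close> by blast
    then show "f (pc c) = 0" using deg_pos[OF c] by simp
  qed
  show "f S = 0"
  proof (cases "S \<in> OC")
    case True
    have "f S * f S = f (pc (ocell S)) * f (pc (ocell S))" using form_pc[OF f f True] .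
    moreover have "ocell S \<in> C" using ocell_ocells True by blast
    ultimately show ?thesis using z2 by simp
  next
    case False then show ?thesis using form_out[OF f] by simp
  qed
qed

lemma M_obar:
  fixes f :: "'a list set \<Rightarrow> real"
  assumes f: "f \<in> forms X (d - 1)" and S: "S \<in> OC"
  shows "M f (obar S) = - M f S"
proof -
  have inj: "inj_on obar (N S)"
  proof (rule inj_onI)
    fix a b assume "a \<in> N S" "b \<in> N S" "obar a = obar b"
    then show "a = b" using nbr_OC oc_props by (metis mem_Collect_eq)
  qed
  have "M f (obar S) = (\<Sum>S'\<in>obar ` N S. f S' / real (deg X (ocell S')))"
    unfolding M_def N_obar[OF S] ..
  also have "\<dots> = (\<Sum>S'\<in>N S. f (obar S') / real (deg X (ocell (obar S'))))"
    by (simp add: sum.reindex[OF inj])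
  also have "\<dots> = (\<Sum>S'\<in>N S. - (f S' / real (deg X (ocell S'))))"
  proof (rule sum.cong[OF refl])
    fix S' assume "S' \<in> N S"
    then have o: "S' \<in> OC" using nbr_OC by simp
    show "f (obar S') / real (deg X (ocell (obar S'))) = - (f S' / real (deg X (ocell S')))"
      using form_obar[OF f o] oc_props[OF o] by simp
  qed
  finally show ?thesis unfolding M_def by (simp add: sum_negf)
qed

lemma Aop_form:
  fixes f :: "'a list set \<Rightarrow> real"
  assumes f: "f \<in> forms X (d - 1)"
  shows "Aop X d p f \<in> forms X (d - 1)"
  unfolding forms_def using form_obar[OF f] M_obar[OF f] oc_props by (auto simp: Aop_real)

lemma Lup_form:
  fixes f :: "'a list set \<Rightarrow> real"
  assumes f: "f \<in> forms X (d - 1)"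
  shows "Lup X d f \<in> forms X (d - 1)"
  unfolding forms_def using form_obar[OF f] M_obar[OF f] oc_props by (auto simp: Lup_M)

definition cc :: "real \<Rightarrow> real" where "cc p = (p * (real d - 1) + 1) / real d"

lemma cc_eq: "cc p = p + (1 - p) / real d"
  using d2 unfolding cc_def by (simp add: field_simps)

lemma part1:
  fixes f :: "'a list set \<Rightarrow> real"
  assumes f: "f \<in> forms X (d - 1)"
  shows "Aop X d p f = (\<lambda>S. cc p * f S - ((1 - p) / real d) * Lup X d f S)"
proof
  fix S
  define k where "k = (1 - p) / real d"
  have "p * f S + k * M f S = (p + k) * f S - k * (f S - M f S)" by (simp add: algebra_simps)
  then show "Aop X d p f S = cc p * f S - ((1 - p) / real d) * Lup X d f S"
    using form_out[OF f, of S] unfolding k_def by (simp add: Aop_real Lup_M cc_eq)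
qed

lemma ip_Aop: "ip (Aop X d p f) g = cc p * ip f g - ((1 - p) / real d) * ip (Lup X d f) g"
proof -
  define k where "k = (1 - p) / real d"
  have e: "p * f S + k * M f S = (p + k) * f S + (- k) * (f S - M f S)" for S by (simp add: algebra_simps)
  have "\<forall>c\<in>C. Aop X d p f (pc c) = cc p * f (pc c) + (- k) * Lup X d f (pc c)"
    using pc_oc[OF SC] e unfolding k_def by (auto simp: Aop_real Lup_M cc_eq)
  then have "ip (Aop X d p f) g = ip (\<lambda>S. cc p * f S + (- k) * Lup X d f S) g"
    unfolding ip_def by (intro sum.cong) auto
  then show ?thesis unfolding ip_lin k_def by simp
qed

lemma B_sym: "B f g = B g f"
  unfolding B_def by (simp add: mult.commute)

lemma Lup_sym:
  fixes f g :: "'a list set \<Rightarrow> real"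
  assumes "f \<in> forms X (d - 1)" "g \<in> forms X (d - 1)"
  shows "ip (Lup X d f) g = ip (Lup X d g) f"
  using K[OF assms] K[OF assms(2,1)] B_sym by simp

lemma SA:
  fixes f g :: "'a list set \<Rightarrow> real"
  assumes "f \<in> forms X (d - 1)" "g \<in> forms X (d - 1)"
  shows "ip (Aop X d p f) g = ip f (Aop X d p g)"
  using ip_Aop[of p f g] ip_Aop[of p g f] Lup_sym[OF assms] ip_sym by metis

lemma B_nonneg: "B f f \<ge> 0"
  unfolding B_def by (intro sum_nonneg) auto

lemma B_le:
  fixes f :: "'a list set \<Rightarrow> real"
  assumes f: "f \<in> forms X (d - 1)"
  shows "B f f \<le> real (d + 1) * ip f f"
proof -
  define a where "a t x = f (fc (can t) x) / real (deg X (t - {x}))" for t x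
  have cob: "cobdry X d f (pc t) = (\<Sum>x\<in>t. a t x)" if t: "t \<in> T" for t
    using COB[OF conjunct1[OF can_T[OF t]] f] can_T[OF t] by (simp add: pc_def a_def)
  have "B f f = (\<Sum>t\<in>T. (\<Sum>x\<in>t. a t x)^2)"
    unfolding B_def by (rule sum.cong[OF refl]) (simp add: cob power2_eq_square)
  also have "\<dots> \<le> (\<Sum>t\<in>T. real (d + 1) * (\<Sum>x\<in>t. (a t x)^2))"
  proof (rule sum_mono)
    fix t assume t: "t \<in> T"
    have "finite t" using cells_finite[OF SC t] .
    moreover have "card t = d + 1" using t by (simp add: cells_def)
    ultimately show "(\<Sum>x\<in>t. a t x)^2 \<le> real (d + 1) * (\<Sum>x\<in>t. (a t x)^2)" using sq_sum_le[of t "a t"] by simp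
  qed
  also have "\<dots> = real (d + 1) * (\<Sum>t\<in>T. \<Sum>x\<in>t. (a t x)^2)" by (simp add: sum_distrib_left)
  also have "(\<Sum>t\<in>T. \<Sum>x\<in>t. (a t x)^2) = (\<Sum>c\<in>C. \<Sum>v\<in>{v. v \<notin> c \<and> insert v c \<in> X}. (a (insert v c) v)^2)"
    by (rule sum_TC)
  also have "\<dots> = ip f f"
    unfolding ip_def
  proof (rule sum.cong[OF refl])
    fix c assume c: "c \<in> C"
    have eq: "(a (insert v c) v)^2 = f (pc c) * f (pc c) / (real (deg X c))^2"
      if v: "v \<in> {v. v \<notin> c \<and> insert v c \<in> X}" for v
    proof -
      have fc_: "finite c" "card c = d" using cells_finite[OF SC c] c d2 by (auto simp: cells_def)
      have tT: "insert v c \<in> T" using v fc_ by (simp add: cells_def)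
      have yt: "can (insert v c) \<in> orderings X d" "set (can (insert v c)) = insert v c" using can_T[OF tT] by auto
      have vin: "v \<in> set (can (insert v c))" using yt by simp
      have o: "fc (can (insert v c)) v \<in> OC" using fc_oc[OF SC yt(1) d2 vin] by simp
      have "ocell (fc (can (insert v c)) v) = insert v c - {v}"
        using ocell_fc[of "can (insert v c)" v] yt vin d2 by (simp add: orderings_def)
      moreover have "insert v c - {v} = c" using v by auto
      ultimately have "f (fc (can (insert v c)) v) * f (fc (can (insert v c)) v) = f (pc c) * f (pc c)"
        using form_pc[OF f f o] by simp
      then show ?thesis unfolding a_def using \<open>insert v c - {v} = c\<close> by (simp add: power2_eq_square)
    qed
    have "(\<Sum>v\<in>{v. v \<notin> c \<and> insert v c \<in> X}. (a (insert v c) v)^2)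
        = (\<Sum>v\<in>{v. v \<notin> c \<and> insert v c \<in> X}. f (pc c) * f (pc c) / (real (deg X c))^2)"
      by (rule sum.cong[OF refl]) (rule eq)
    also have "\<dots> = real (card {v. v \<notin> c \<and> insert v c \<in> X}) * (f (pc c) * f (pc c) / (real (deg X c))^2)"
      by simp
    also have "card {v. v \<notin> c \<and> insert v c \<in> X} = deg X c"
      using cone_card[OF conjunct1[OF can_C[OF c]]] cone_can[OF c] can_C[OF c] by simp
    finally show "(\<Sum>v\<in>{v. v \<notin> c \<and> insert v c \<in> X}. (a (insert v c) v)^2) = f (pc c) * f (pc c) / real (deg X c)"
      using deg_pos[OF c] by (simp add: power2_eq_square)
  qed
  finally show ?thesis .
qed

lemma quad:
  fixes f :: "'a list set \<Rightarrow> real"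
  assumes f: "f \<in> forms X (d - 1)" and p: "0 \<le> p" "p < 1"
  shows "(2 * p - 1) * ip f f \<le> ip (Aop X d p f) f" and "ip (Aop X d p f) f \<le> cc p * ip f f"
proof -
  define k where "k = (1 - p) / real d"
  have e: "ip (Aop X d p f) f = cc p * ip f f - k * B f f"
    using ip_Aop[of p f f] K[OF f f] unfolding k_def by simp
  have k: "k \<ge> 0" using p d2 unfolding k_def by simp
  have kb: "k * B f f \<ge> 0" using k B_nonneg[of f] by simp
  show "ip (Aop X d p f) f \<le> cc p * ip f f" using e kb by simp
  have 1: "k * B f f \<le> k * (real (d + 1) * ip f f)"
    using B_le[OF f] k by (rule mult_left_mono)
  have 2: "cc p - k * real (d + 1) = 2 * p - 1"
    using d2 unfolding k_def by (simp add: cc_def field_simps)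
  have "(2 * p - 1) * ip f f = (cc p - k * real (d + 1)) * ip f f" using 2 by simp
  also have "\<dots> = cc p * ip f f - k * (real (d + 1) * ip f f)" by (simp add: algebra_simps)
  finally have "(2 * p - 1) * ip f f = cc p * ip f f - k * (real (d + 1) * ip f f)" .
  then show "(2 * p - 1) * ip f f \<le> ip (Aop X d p f) f" using e 1 by simp
qed

end


context cx begin

lemma forms_add:
  fixes f g :: "'a list set \<Rightarrow> real"
  shows "f \<in> forms X (d - 1) \<Longrightarrow> g \<in> forms X (d - 1) \<Longrightarrow> (\<lambda>S. f S + t * g S) \<in> forms X (d - 1)"
  using forms_lin[of f g 1 t] by simp

lemma forms_scale:
  fixes f :: "'a list set \<Rightarrow> real"
  shows "f \<in> forms X (d - 1) \<Longrightarrow> (\<lambda>S. t * f S) \<in> forms X (d - 1)"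
  using forms_lin[of f f t 0] by simp

lemma Aop_add: "Aop X d p (\<lambda>S. (f S :: real) + t * g S) = (\<lambda>S. Aop X d p f S + t * Aop X d p g S)"
  using Aop_lin[of p 1 f t g] by simp

lemma Aop_scale: "Aop X d p (\<lambda>S. t * (f S :: real)) = (\<lambda>S. t * Aop X d p f S)"
  using Aop_lin[of p t f 0 f] by simp

lemma ip_add1: "ip (\<lambda>S. f S + t * g S) h = ip f h + t * ip g h"
  using ip_lin[of 1 f t g h] by simp

lemma ip_add2: "ip h (\<lambda>S. f S + t * g S) = ip h f + t * ip h g"
  using ip_add1 ip_sym by metis

lemma ip_scale1: "ip (\<lambda>S. t * f S) h = t * ip f h"
  using ip_lin[of t f 0 f h] by simp

lemma ip_scale2: "ip h (\<lambda>S. t * f S) = t * ip h f"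
  using ip_scale1 ip_sym by metis

lemma CS:
  assumes g: "ip g g > 0"
  shows "(ip f g)^2 \<le> ip f f * ip g g"
proof -
  define t where "t = - ip f g / ip g g"
  have "0 \<le> ip (\<lambda>S. f S + t * g S) (\<lambda>S. f S + t * g S)" by (rule ip_nonneg)
  also have "\<dots> = ip f f + 2 * t * ip f g + t * t * ip g g"
    by (simp add: ip_add1 ip_add2 ip_sym[of g f] algebra_simps)
  also have "\<dots> = ip f f - (ip f g)^2 / ip g g"
    using g unfolding t_def by (simp add: field_simps power2_eq_square)
  finally have "(ip f g)^2 / ip g g \<le> ip f f" by simp
  then show ?thesis using g by (simp add: field_simps)
qed

lemma cc_pos: "0 \<le> p \<Longrightarrow> p < 1 \<Longrightarrow> cc p > 0"
  using d2 unfolding cc_eq by (simp add: add_nonneg_pos)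

lemma Qbound:
  fixes h :: "'a list set \<Rightarrow> real"
  assumes h: "h \<in> forms X (d - 1)" and p: "0 \<le> p" "p < 1"
  shows "\<bar>ip (Aop X d p h) h\<bar> \<le> max \<bar>2 * p - 1\<bar> (cc p) * ip h h"
proof -
  have n: "ip h h \<ge> 0" by (rule ip_nonneg)
  have 1: "(2 * p - 1) * ip h h \<le> ip (Aop X d p h) h" "ip (Aop X d p h) h \<le> cc p * ip h h" using quad[OF h p] by auto
  have "- max \<bar>2 * p - 1\<bar> (cc p) \<le> 2 * p - 1" by simp
  then have "(- max \<bar>2 * p - 1\<bar> (cc p)) * ip h h \<le> (2 * p - 1) * ip h h" using n by (rule mult_right_mono)
  then have "- (max \<bar>2 * p - 1\<bar> (cc p) * ip h h) \<le> (2 * p - 1) * ip h h" by simp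
  moreover have "cc p * ip h h \<le> max \<bar>2 * p - 1\<bar> (cc p) * ip h h" using n by (simp add: mult_right_mono)
  ultimately show ?thesis using 1 by linarith
qed

lemma contract:
  fixes f :: "'a list set \<Rightarrow> real"
  assumes f: "f \<in> forms X (d - 1)" and p: "0 \<le> p" "p < 1"
  shows "ip (Aop X d p f) (Aop X d p f) \<le> (max \<bar>2 * p - 1\<bar> (cc p))^2 * ip f f"
proof -
  define r where "r = max \<bar>2 * p - 1\<bar> (cc p)"
  have rp: "r > 0" using cc_pos[OF p] unfolding r_def by simp
  define A where "A = (Aop X d p :: ('a list set \<Rightarrow> real) \<Rightarrow> _)"
  define g where "g = (\<lambda>S. (1 / r) * A f S)"
  have Af: "A f \<in> forms X (d - 1)" using Aop_form[OF f] unfolding A_def .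
  have gf: "g \<in> forms X (d - 1)" using forms_scale[OF Af] unfolding g_def .
  define a where "a = ip f f"
  define b where "b = ip (A f) (A f)"
  have Ag: "A g = (\<lambda>S. (1 / r) * A (A f) S)" unfolding g_def A_def by (rule Aop_scale)
  have igg: "ip g g = b / r^2" unfolding g_def b_def ip_scale1 ip_scale2 by (simp add: power2_eq_square)
  have iAfg: "ip (A f) g = b / r" unfolding g_def b_def ip_scale2 by simp
  have iAgf: "ip (A g) f = b / r" using SA[OF gf f, of p] ip_sym iAfg unfolding A_def by metis
  define h1 where "h1 = (\<lambda>S. f S + 1 * g S)"
  define h2 where "h2 = (\<lambda>S. f S + (-1) * g S)"
  have pl: "h1 \<in> forms X (d - 1)" "h2 \<in> forms X (d - 1)"
    unfolding h1_def h2_def by (rule forms_add[OF f gf])+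
  have Q1: "\<bar>ip (A h1) h1\<bar> \<le> r * ip h1 h1"
    using Qbound[OF pl(1) p] unfolding A_def r_def .
  have Q2: "\<bar>ip (A h2) h2\<bar> \<le> r * ip h2 h2"
    using Qbound[OF pl(2) p] unfolding A_def r_def .
  have e1: "ip (A h1) h1 = ip (A f) f + ip (A f) g + ip (A g) f + ip (A g) g"
    unfolding h1_def A_def Aop_add ip_add1 ip_add2 by simp
  have e2: "ip (A h2) h2 = ip (A f) f - ip (A f) g - ip (A g) f + ip (A g) g"
    unfolding h2_def A_def Aop_add ip_add1 ip_add2 by simp
  have n1: "ip h1 h1 = a + 2 * ip f g + ip g g"
    unfolding h1_def a_def ip_add1 ip_add2 using ip_sym[of g f] by simp
  have n2: "ip h2 h2 = a - 2 * ip f g + ip g g"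
    unfolding h2_def a_def ip_add1 ip_add2 using ip_sym[of g f] by simp
  have s1: "ip (A h1) h1 \<le> r * ip h1 h1" using Q1 by simp
  have s2: "- ip (A h2) h2 \<le> r * ip h2 h2" using Q2 by simp
  have "ip (A h1) h1 - ip (A h2) h2 \<le> r * (ip h1 h1 + ip h2 h2)" using s1 s2 by (simp add: ring_distribs)
  moreover have "ip (A h1) h1 - ip (A h2) h2 = 4 * (b / r)" using e1 e2 iAfg iAgf by simp
  moreover have "ip h1 h1 + ip h2 h2 = 2 * a + 2 * (b / r^2)" using n1 n2 igg by simp
  ultimately have "4 * (b / r) \<le> r * (2 * a + 2 * (b / r^2))" by simp
  then have "4 * b \<le> 2 * r^2 * a + 2 * b" using rp by (simp add: field_simps power2_eq_square)
  then show ?thesis unfolding b_def a_def A_def r_def by simp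
qed

lemma iter_form:
  fixes f :: "'a list set \<Rightarrow> real"
  shows "f \<in> forms X (d - 1) \<Longrightarrow> (Aop X d p ^^ n) f \<in> forms X (d - 1)"
proof (induction n)
  case 0 then show ?case by simp
next
  case (Suc n) then show ?case using Aop_form[of "(Aop X d p ^^ n) f" p] by simp
qed

lemma iter_contract:
  fixes f :: "'a list set \<Rightarrow> real"
  assumes f: "f \<in> forms X (d - 1)" and p: "0 \<le> p" "p < 1"
  shows "ip ((Aop X d p ^^ n) f) ((Aop X d p ^^ n) f) \<le> ((max \<bar>2 * p - 1\<bar> (cc p))^2)^n * ip f f"
proof (induction n)
  case 0 then show ?case by simp
next
  case (Suc n)
  have "ip ((Aop X d p ^^ Suc n) f) ((Aop X d p ^^ Suc n) f) \<le> (max \<bar>2 * p - 1\<bar> (cc p))^2 * ip ((Aop X d p ^^ n) f) ((Aop X d p ^^ n) f)"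
    using contract[OF iter_form[OF f] p] by simp
  also have "\<dots> \<le> (max \<bar>2 * p - 1\<bar> (cc p))^2 * (((max \<bar>2 * p - 1\<bar> (cc p))^2)^n * ip f f)"
    using Suc by (intro mult_left_mono) auto
  finally show ?case by (simp add: mult.assoc)
qed

lemma fnorm_ip: "fnorm X d f = sqrt (ip f f)"
  unfolding fnorm_def ip_def pc_def can_def by (simp add: power2_eq_square)

lemma ind1_form:
  assumes S0: "S0 \<in> OC"
  shows "ind1 S0 \<in> forms X (d - 1)"
proof -
  have o: "obar S0 \<in> OC" "obar (obar S0) = S0" "obar S0 \<noteq> S0" using oc_props[OF S0] by auto
  have "ind1 S0 (obar S) = - ind1 S0 S" if S: "S \<in> OC" for S
  proof -
    have oS: "obar (obar S) = S" "obar S \<noteq> S" using oc_props[OF S] by auto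
    show ?thesis
    proof (cases "S = S0")
      case True then show ?thesis using o by (simp add: ind1_def)
    next
      case F1: False
      show ?thesis
      proof (cases "S = obar S0")
        case True then show ?thesis using o F1 by (simp add: ind1_def)
      next
        case False
        have "obar S \<noteq> S0" using False oS by auto
        moreover have "obar S \<noteq> obar S0" using F1 oS o by metis
        ultimately show ?thesis using F1 False by (simp add: ind1_def)
      qed
    qed
  qed
  moreover have "ind1 S0 S = 0" if "S \<notin> OC" for S using that S0 o by (auto simp: ind1_def)
  ultimately show ?thesis by (simp add: forms_def)
qed

lemma ip_ind1:
  assumes S0: "S0 \<in> OC"
  shows "ip (ind1 S0) (ind1 S0) \<le> 1"
proof -
  let ?c0 = "ocell S0"
  have c0: "?c0 \<in> C" using ocell_ocells S0 by blast
  have t: "ind1 S0 (pc c) * ind1 S0 (pc c) / real (deg X c) = (if c = ?c0 then 1 / real (deg X ?c0) else 0)"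
    if c: "c \<in> C" for c
  proof -
    have pc: "pc c \<in> OC" "ocell (pc c) = c" using pc_oc[OF SC c] by auto
    show ?thesis
    proof (cases "c = ?c0")
      case True
      then have "pc c = S0 \<or> pc c = obar S0" using ocell_cases[OF S0 pc(1) d1] pc by simp
      then show ?thesis using True oc_props[OF S0] by (auto simp: ind1_def)
    next
      case False
      then have "pc c \<noteq> S0" "pc c \<noteq> obar S0" using pc oc_props[OF S0] by auto
      then show ?thesis using False by (simp add: ind1_def)
    qed
  qed
  have "ip (ind1 S0) (ind1 S0) = (\<Sum>c\<in>C. (if c = ?c0 then 1 / real (deg X ?c0) else 0))"
    unfolding ip_def using t by (intro sum.cong) auto
  also have "\<dots> = 1 / real (deg X ?c0)" using c0 finC by simp
  also have "\<dots> \<le> 1" using deg_pos[OF c0] by simp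
  finally show ?thesis .
qed

end


context cx begin

lemma fin_ord: "finite (orderings X j)"
proof -
  have "orderings X j \<subseteq> {xs. set xs \<subseteq> \<Union> X \<and> length xs = Suc j}" by (auto simp: orderings_def)
  moreover have "finite (\<Union> X)" using finX X_finite_el by auto
  ultimately show ?thesis using finite_lists_length_eq finite_subset by blast
qed

lemma fin_OC: "finite (ocells X j)"
  unfolding ocells_def using fin_ord by simp

lemma nbr_irrefl: "\<not> nbr X d S S"
proof
  assume n: "nbr X d S S"
  then have S: "S \<in> OC" using nbr_OC by simp
  obtain s where s: "s \<in> orderings X (d - 1)" "S = oclass s" using ocellsE[OF S] by blast
  have "S \<in> N (oclass s)" using n s by simp
  then obtain v x where vx: "v \<in> cone s" "x \<in> set s" "S = obar (fc (v # s) x)"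
    unfolding nbr_char[OF s(1)] by auto
  have "ocell S = insert v (set s - {x})" using ocell_nb(1)[OF s(1) vx(1,2)] vx by simp
  moreover have "ocell S = set s" using s ocell_oclass by (auto simp: orderings_def)
  moreover have "v \<notin> set s" using vx by (simp add: cone_def)
  ultimately show False by auto
qed

lemma N_eq: "{S. nbr X d S S'} = N S'"
  using nbr_sym by blast

lemma walk_step:
  assumes S': "S' \<in> OC"
  shows "walk_prob X d p S0 (Suc n) S' = p * walk_prob X d p S0 n S'
     + (1 - p) / real d * (\<Sum>S\<in>N S'. walk_prob X d p S0 n S / real (deg X (ocell S)))"
proof -
  define w where "w = walk_prob X d p S0 n"
  have tp: "w S * trans_prob X d p S S' = (if S = S' then w S * p else 0)
      + (if nbr X d S S' then (1 - p) / real d * (w S / real (deg X (ocell S))) else 0)" for S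
    using nbr_irrefl[of S] by (auto simp: trans_prob_def)
  have "walk_prob X d p S0 (Suc n) S' = (\<Sum>S\<in>OC. w S * trans_prob X d p S S')"
    by (simp add: w_def)
  also have "\<dots> = (\<Sum>S\<in>OC. (if S = S' then w S * p else 0))
      + (\<Sum>S\<in>OC. (if nbr X d S S' then (1 - p) / real d * (w S / real (deg X (ocell S))) else 0))"
    unfolding tp by (rule sum.distrib)
  also have "(\<Sum>S\<in>OC. (if S = S' then w S * p else 0)) = p * w S'"
    using S' fin_OC by simp
  also have "(\<Sum>S\<in>OC. (if nbr X d S S' then (1 - p) / real d * (w S / real (deg X (ocell S))) else 0))
      = (\<Sum>S\<in>{S \<in> OC. nbr X d S S'}. (1 - p) / real d * (w S / real (deg X (ocell S))))"
    by (rule sum.inter_filter[OF fin_OC, symmetric])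
  also have "{S \<in> OC. nbr X d S S'} = N S'" using N_eq nbr_OC by blast
  finally show ?thesis unfolding w_def by (simp add: sum_distrib_left)
qed

lemma E_step:
  assumes S0: "S0 \<in> OC"
  shows "Eproc X d p S0 (Suc n) = Aop X d p (Eproc X d p S0 n)"
proof
  fix S'
  define w where "w = walk_prob X d p S0 n"
  show "Eproc X d p S0 (Suc n) S' = Aop X d p (Eproc X d p S0 n) S'"
  proof (cases "S' \<in> OC")
    case False then show ?thesis by (simp add: Eproc_def Aop_real)
  next
    case True
    have o: "obar S' \<in> OC" using oc_props[OF True] by simp
    have inj: "inj_on obar (N S')"
    proof (rule inj_onI)
      fix a b assume "a \<in> N S'" "b \<in> N S'" "obar a = obar b"
      then show "a = b" using nbr_OC oc_props by (metis mem_Collect_eq)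
    qed
    have s2: "(\<Sum>S\<in>N (obar S'). w S / real (deg X (ocell S))) = (\<Sum>S\<in>N S'. w (obar S) / real (deg X (ocell S)))"
    proof -
      have "(\<Sum>S\<in>N (obar S'). w S / real (deg X (ocell S))) = (\<Sum>S\<in>obar ` N S'. w S / real (deg X (ocell S)))"
        using N_obar[OF True] by simp
      also have "\<dots> = (\<Sum>S\<in>N S'. w (obar S) / real (deg X (ocell (obar S))))"
        by (simp add: sum.reindex[OF inj])
      also have "\<dots> = (\<Sum>S\<in>N S'. w (obar S) / real (deg X (ocell S)))"
        using nbr_OC oc_props by (intro sum.cong) auto
      finally show ?thesis .
    qed
    have M: "M (Eproc X d p S0 n) S' = (\<Sum>S\<in>N S'. w S / real (deg X (ocell S))) - (\<Sum>S\<in>N S'. w (obar S) / real (deg X (ocell S)))"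
    proof -
      have "M (Eproc X d p S0 n) S' = (\<Sum>S\<in>N S'. (w S - w (obar S)) / real (deg X (ocell S)))"
        unfolding M_def w_def using nbr_OC by (intro sum.cong) (auto simp: Eproc_def)
      then show ?thesis by (simp add: diff_divide_distrib sum_subtractf)
    qed
    define a where "a = (\<Sum>S\<in>N S'. w S / real (deg X (ocell S)))"
    define b where "b = (\<Sum>S\<in>N S'. w (obar S) / real (deg X (ocell S)))"
    define k where "k = (1 - p) / real d"
    have w1: "walk_prob X d p S0 (Suc n) S' = p * w S' + k * a"
      using walk_step[OF True, of p S0 n] unfolding w_def a_def k_def by simp
    have w2: "walk_prob X d p S0 (Suc n) (obar S') = p * w (obar S') + k * b"
      using walk_step[OF o, of p S0 n] s2 unfolding w_def b_def k_def by simp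
    have "Eproc X d p S0 (Suc n) S' = (p * w S' + k * a) - (p * w (obar S') + k * b)"
      using True w1 w2 by (simp add: Eproc_def)
    also have "\<dots> = p * (w S' - w (obar S')) + k * (a - b)" by (simp add: algebra_simps)
    also have "\<dots> = Aop X d p (Eproc X d p S0 n) S'"
      using True M unfolding a_def b_def k_def w_def by (simp add: Aop_real Eproc_def)
    finally show ?thesis .
  qed
qed

lemma E0:
  assumes S0: "S0 \<in> OC"
  shows "Eproc X d p S0 0 = ind1 S0"
proof
  fix S
  have o: "obar S0 \<in> OC" "obar (obar S0) = S0" "obar S0 \<noteq> S0" using oc_props[OF S0] by auto
  show "Eproc X d p S0 0 S = ind1 S0 S"
  proof (cases "S \<in> OC")
    case True
    have "obar S = S0 \<longleftrightarrow> S = obar S0" using oc_props[OF True] o by metis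
    then show ?thesis using True o by (auto simp: Eproc_def ind1_def)
  next
    case False then show ?thesis using S0 o by (auto simp: Eproc_def ind1_def)
  qed
qed

lemma E_iter:
  assumes S0: "S0 \<in> OC"
  shows "Eproc X d p S0 n = (Aop X d p ^^ n) (ind1 S0)"
  by (induction n) (simp_all add: E0[OF S0] E_step[OF S0])

end


context cx begin

lemma Re_form:
  fixes f :: "'a list set \<Rightarrow> complex"
  assumes "f \<in> forms X (d - 1)"
  shows "(\<lambda>S. Re (f S)) \<in> forms X (d - 1)" "(\<lambda>S. Im (f S)) \<in> forms X (d - 1)"
  using assms by (auto simp: forms_def)

lemma Aop_Re:
  fixes f :: "'a list set \<Rightarrow> complex"
  shows "Aop X d p (\<lambda>S. Re (f S)) = (\<lambda>S. Re (Aop X d p f S))"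
    and "Aop X d p (\<lambda>S. Im (f S)) = (\<lambda>S. Im (Aop X d p f S))"
  by (rule ext, simp add: Aop_def)+

lemma complex_eig:
  fixes f :: "'a list set \<Rightarrow> complex" and \<mu> :: complex
  assumes f: "f \<in> forms X (d - 1)" and nz: "f \<noteq> (\<lambda>_. 0)" and e: "Aop X d p f = (\<lambda>S. \<mu> * f S)"
    and p: "0 \<le> p" "p < 1"
  shows "Im \<mu> = 0 \<and> 2 * p - 1 \<le> Re \<mu> \<and> Re \<mu> \<le> cc p"
proof -
  define u where "u = (\<lambda>S. Re (f S))"
  define v where "v = (\<lambda>S. Im (f S))"
  have uf: "u \<in> forms X (d - 1)" and vf: "v \<in> forms X (d - 1)" using Re_form[OF f] unfolding u_def v_def by auto
  have Au: "Aop X d p u = (\<lambda>S. Re \<mu> * u S + (- Im \<mu>) * v S)"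
    unfolding u_def v_def Aop_Re e by (simp add: fun_eq_iff)
  have Av: "Aop X d p v = (\<lambda>S. Im \<mu> * u S + Re \<mu> * v S)"
    unfolding u_def v_def Aop_Re e by (simp add: fun_eq_iff algebra_simps)
  have "ip (Aop X d p u) v = ip u (Aop X d p v)" using SA[OF uf vf] .
  then have "Re \<mu> * ip u v + (- Im \<mu>) * ip v v = Im \<mu> * ip u u + Re \<mu> * ip u v"
    unfolding Au Av ip_lin using ip_sym[of u v] ip_sym[of u "\<lambda>S. Im \<mu> * u S + Re \<mu> * v S"] ip_lin[of "Im \<mu>" u "Re \<mu>" v u] by simp
  then have z: "Im \<mu> * (ip u u + ip v v) = 0" by (simp add: algebra_simps)
  have Qp: "ip u u + ip v v > 0"
  proof (rule ccontr)
    assume "\<not> ip u u + ip v v > 0"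
    then have "ip u u = 0" "ip v v = 0" using ip_nonneg[of u] ip_nonneg[of v] by linarith+
    then have "u = (\<lambda>_. 0)" "v = (\<lambda>_. 0)" using ip_zero uf vf by auto
    then have r0: "Re (f S) = 0" "Im (f S) = 0" for S unfolding u_def v_def by (metis fun_cong)+
    have "f = (\<lambda>_. 0)" by (rule ext, rule complex_eqI) (simp_all add: r0)
    then show False using nz by simp
  qed
  have im: "Im \<mu> = 0" using z Qp by simp
  have Au': "ip (Aop X d p u) u = Re \<mu> * ip u u"
    unfolding Au using im ip_lin[of "Re \<mu>" u "- Im \<mu>" v u] by simp
  have Av': "ip (Aop X d p v) v = Re \<mu> * ip v v"
    unfolding Av using im ip_lin[of "Im \<mu>" u "Re \<mu>" v v] by simp
  have q1: "(2 * p - 1) * ip u u \<le> Re \<mu> * ip u u" "Re \<mu> * ip u u \<le> cc p * ip u u"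
    using quad[OF uf p] Au' by auto
  have q2: "(2 * p - 1) * ip v v \<le> Re \<mu> * ip v v" "Re \<mu> * ip v v \<le> cc p * ip v v"
    using quad[OF vf p] Av' by auto
  have "(2 * p - 1) * (ip u u + ip v v) \<le> Re \<mu> * (ip u u + ip v v)"
    using q1 q2 by (simp add: ring_distribs)
  then have l: "2 * p - 1 \<le> Re \<mu>" using Qp by simp
  have "Re \<mu> * (ip u u + ip v v) \<le> cc p * (ip u u + ip v v)"
    using q1 q2 by (simp add: ring_distribs)
  then have r: "Re \<mu> \<le> cc p" using Qp by simp
  show ?thesis using im l r by simp
qed

end


context cx begin

lemma closed_iff:
  fixes f :: "'a list set \<Rightarrow> real"
  assumes f: "f \<in> forms X (d - 1)" and p: "0 \<le> p" "p < 1"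
  shows "Aop X d p f = (\<lambda>S. cc p * f S) \<longleftrightarrow> f \<in> closed_forms X d"
proof
  have k: "(1 - p) / real d > 0" using p d2 by simp
  assume e: "Aop X d p f = (\<lambda>S. cc p * f S)"
  have L0: "Lup X d f S = 0" for S
  proof -
    have "cc p * f S - ((1 - p) / real d) * Lup X d f S = cc p * f S"
      using fun_cong[OF e, of S] part1[OF f, of p] by metis
    then show ?thesis using k p d2 by simp
  qed
  have "B f f = 0" using K[OF f f] L0 by (simp add: ip_def)
  then have "\<forall>t\<in>T. cobdry X d f (pc t) * cobdry X d f (pc t) = 0"
    unfolding B_def using sum_nonneg_eq_0_iff[OF finT, of "\<lambda>t. cobdry X d f (pc t) * cobdry X d f (pc t)"] by auto
  then have ct: "\<forall>t\<in>T. cobdry X d f (pc t) = 0" by simp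
  have "cobdry X d f T0 = 0" for T0
  proof (cases "T0 \<in> ocells X d")
    case False then show ?thesis by (simp add: cobdry_def)
  next
    case True
    obtain ys where ys: "ys \<in> orderings X d" "T0 = oclass ys" using ocellsE[OF True] by blast
    have tT: "set ys \<in> T" using ys by (auto simp: orderings_def cells_def distinct_card)
    have ct': "can (set ys) \<in> orderings X d" "set (can (set ys)) = set ys" using can_T[OF tT] by auto
    have "cobdry X d f (oclass ys) = (if po (can (set ys)) ys then cobdry X d f (oclass (can (set ys)))
        else - cobdry X d f (oclass (can (set ys))))"
      using COB_sign[OF ct'(1) ys(1) ct'(2) f] .
    then show ?thesis using ct tT ys by (simp add: pc_def)
  qed
  then show "f \<in> closed_forms X d" using f by (simp add: closed_forms_def)
next
  assume cl: "f \<in> closed_forms X d"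
  then have c0: "\<forall>T0. cobdry X d f T0 = 0" by (simp add: closed_forms_def)
  have Lf: "Lup X d f \<in> forms X (d - 1)" using Lup_form[OF f] .
  have "B f (Lup X d f) = 0" unfolding B_def using c0 by simp
  then have "ip (Lup X d f) (Lup X d f) = 0" using K[OF f Lf] by simp
  then have "Lup X d f = (\<lambda>_. 0)" using ip_zero[OF Lf] by simp
  then show "Aop X d p f = (\<lambda>S. cc p * f S)" using part1[OF f, of p] by simp
qed

end

locale cx0 = cx +
  fixes S0 :: "'a list set"
  assumes S0: "S0 \<in> ocells X (d - 1)"
begin

definition s0 where "s0 = orep S0"
definition rr where "rr = tl s0"
definition rho where "rho = set rr"

lemma s0: "s0 \<in> orderings X (d - 1)" "oclass s0 = S0"
  using orep_ord[OF S0] unfolding s0_def by auto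

lemma s0_props: "distinct s0" "length s0 = d" "s0 = hd s0 # rr" "set s0 = insert (hd s0) rho"
  "hd s0 \<notin> rho" "distinct rr" "length rr = d - 1" "card rho = d - 1" "ocell S0 = set s0"
proof -
  show d: "distinct s0" "length s0 = d" using s0 d2 by (auto simp: orderings_def)
  then have ne: "s0 \<noteq> []" using d2 by auto
  show e: "s0 = hd s0 # rr" unfolding rr_def using ne by simp
  show "set s0 = insert (hd s0) rho" unfolding rho_def using e by (metis list.simps(15))
  show "hd s0 \<notin> rho" "distinct rr" unfolding rho_def using d(1) e by (metis distinct.simps(2))+
  show "length rr = d - 1" unfolding rr_def using d by simp
  then show "card rho = d - 1" unfolding rho_def using \<open>distinct rr\<close> by (simp add: distinct_card)
  show "ocell S0 = set s0" using s0 ocell_oclass d by metis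
qed

definition z :: "'a list set \<Rightarrow> real" where
  "z S = (if S \<in> OC \<and> rho \<subseteq> ocell S then
     (if S = oclass (the_elem (ocell S - rho) # rr) then 1 else -1) * real (deg X (ocell S)) else 0)"

lemma zw:
  assumes S: "S \<in> OC" and r: "rho \<subseteq> ocell S"
  obtains w where "ocell S - rho = {w}" "w \<notin> rho" "w # rr \<in> orderings X (d - 1)" "set (w # rr) = ocell S"
    "S = oclass (w # rr) \<or> S = obar (oclass (w # rr))"
proof -
  have c: "ocell S \<in> C" using ocell_ocells[OF S] .
  have fc_: "finite (ocell S)" "card (ocell S) = d" using cells_finite[OF SC c] c d2 by (auto simp: cells_def)
  have "card (ocell S - rho) = card (ocell S) - card rho" using r fc_ finite_subset by (metis card_Diff_subset)
  then have "card (ocell S - rho) = 1" using fc_ s0_props d2 by simp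
  then obtain w where w: "ocell S - rho = {w}" by (rule card_1_singletonE)
  have wr: "w \<notin> rho" using w by auto
  have sw: "set (w # rr) = ocell S" using w r unfolding rho_def by auto
  have o: "w # rr \<in> orderings X (d - 1)"
    using wr s0_props sw c d2 unfolding rho_def by (auto simp: orderings_def cells_def)
  have dwr: "distinct (w # rr)" using o by (simp add: orderings_def)
  have "ocell (oclass (w # rr)) = ocell S" using ocell_oclass[OF dwr] sw by simp
  then have "S = oclass (w # rr) \<or> S = obar (oclass (w # rr))"
    using ocell_cases[OF oclass_ocells[OF o] S d1] by simp
  then show ?thesis using that w wr o sw by blast
qed

lemma z_form: "z \<in> forms X (d - 1)"
proof -
  have "z (obar S) = - z S" if S: "S \<in> OC" for S
  proof (cases "rho \<subseteq> ocell S")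
    case True
    obtain w where w: "ocell S - rho = {w}" "w # rr \<in> orderings X (d - 1)"
      "S = oclass (w # rr) \<or> S = obar (oclass (w # rr))" using zw[OF S True] by metis
    have ob: "obar S \<in> OC" "ocell (obar S) = ocell S" "obar (obar S) = S" "obar S \<noteq> S" using oc_props[OF S] by auto
    have wo: "oclass (w # rr) \<in> OC" using oclass_ocells[OF w(2)] .
    show ?thesis
      using w(3)
    proof
      assume e: "S = oclass (w # rr)"
      then show ?thesis using ob S True w(1) by (simp add: z_def)
    next
      assume e: "S = obar (oclass (w # rr))"
      then have "S \<noteq> oclass (w # rr)" "obar S = oclass (w # rr)" using oc_props[OF wo] by auto
      then show ?thesis using ob S True w(1) by (simp add: z_def)
    qed
  next
    case False then show ?thesis using oc_props[OF S] by (simp add: z_def)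
  qed
  moreover have "z S = 0" if "S \<notin> OC" for S using that by (simp add: z_def)
  ultimately show ?thesis by (simp add: forms_def)
qed

lemma z_S0: "z S0 = real (deg X (ocell S0))"
proof -
  have r: "rho \<subseteq> ocell S0" using s0_props by auto
  have "ocell S0 - rho = {hd s0}" using s0_props by auto
  then have "the_elem (ocell S0 - rho) = hd s0" by simp
  moreover have "oclass (hd s0 # rr) = S0" using s0 s0_props by simp
  ultimately show ?thesis using S0 r by (simp add: z_def)
qed

lemma z_nz: "z \<noteq> (\<lambda>_. 0)"
proof
  assume "z = (\<lambda>_. 0)"
  then have "z S0 = 0" by simp
  moreover have "ocell S0 \<in> C" using ocell_ocells[OF S0] .
  ultimately show False using z_S0 deg_pos by fastforce
qed

lemma z_closed: "z \<in> closed_forms X d"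
proof -
  have "cobdry X d z T0 = 0" for T0
  proof (cases "T0 \<in> ocells X d")
    case False then show ?thesis by (simp add: cobdry_def)
  next
    case True
    obtain ys where ys: "ys \<in> orderings X d" "T0 = oclass ys" using ocellsE[OF True] by blast
    have dys: "distinct ys" "length ys = d + 1" "set ys \<in> X" using ys by (auto simp: orderings_def)
    have zero: "z (fc xs x) = 0" if xs: "xs \<in> orderings X d" "x \<in> set xs" "\<not> rho \<subseteq> set xs - {x}" for xs x
    proof -
      have "ocell (fc xs x) = set xs - {x}" using ocell_fc[of xs x] xs d2 by (auto simp: orderings_def)
      then show ?thesis using xs(3) by (simp add: z_def)
    qed
    show ?thesis
    proof (cases "rho \<subseteq> set ys")
      case False
      have "cobdry X d z (oclass ys) = (\<Sum>x\<in>set ys. z (fc ys x) / real (deg X (set ys - {x})))"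
        using COB[OF ys(1) z_form] .
      also have "\<dots> = 0" using zero[OF ys(1)] False by (intro sum.neutral) auto
      finally show ?thesis using ys by simp
    next
      case True
      have fy: "finite (set ys)" by simp
      have "card (set ys - rho) = card (set ys) - card rho" using True by (metis card_Diff_subset finite_subset fy)
      then have "card (set ys - rho) = 2" using dys s0_props d2 by (simp add: distinct_card)
      then obtain a b where ab: "set ys - rho = {a, b}" "a \<noteq> b" by (metis card_2_iff)
      let ?ys' = "a # b # rr"
      have abr: "a \<notin> rho" "b \<notin> rho" "a \<in> set ys" "b \<in> set ys" using ab by auto
      have sy: "set ?ys' = set ys" using ab True unfolding rho_def by auto
      have ys': "?ys' \<in> orderings X d"
        using abr ab s0_props sy dys d2 unfolding rho_def by (auto simp: orderings_def)
      have cs: "cobdry X d z (oclass ys) = (if po ?ys' ys then cobdry X d z (oclass ?ys') else - cobdry X d z (oclass ?ys'))"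
        using COB_sign[OF ys' ys(1) sy z_form] .
      have dys': "distinct ?ys'" using ys' by (simp add: orderings_def)
      have br: "b # rr \<in> orderings X (d - 1)" "a # rr \<in> orderings X (d - 1)"
        using ys' d2 X_sub[of "set ?ys'" "set (b # rr)"] X_sub[of "set ?ys'" "set (a # rr)"]
        by (auto simp: orderings_def)
      have cb: "set (b # rr) \<in> C" "set (a # rr) \<in> C" using br by (auto simp: orderings_def cells_def distinct_card)
      have ta: "z (fc ?ys' a) / real (deg X (set ?ys' - {a})) = 1"
      proof -
        have "fc ?ys' a = oclass (b # rr)" using fc_hd[of a "b # rr"] dys' s0_props d2 by simp
        moreover have "set ?ys' - {a} = set (b # rr)" using dys' by auto
        moreover have "z (oclass (b # rr)) = real (deg X (set (b # rr)))"
        proof -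
          have o: "oclass (b # rr) \<in> OC" using oclass_ocells[OF br(1)] .
          have dbr: "distinct (b # rr)" using br by (simp add: orderings_def)
          have oc: "ocell (oclass (b # rr)) = set (b # rr)" by (rule ocell_oclass[OF dbr])
          have r1: "ocell (oclass (b # rr)) - rho = {b}" "rho \<subseteq> ocell (oclass (b # rr))"
            using abr oc unfolding rho_def by auto
          show ?thesis unfolding z_def using o r1 oc by simp
        qed
        ultimately show ?thesis using deg_pos[OF cb(1)] by simp
      qed
      have tb: "z (fc ?ys' b) / real (deg X (set ?ys' - {b})) = -1"
      proof -
        have "fc ?ys' b = obar (oclass (a # rr))" using fc_second[of a b rr] dys' s0_props d2 by simp
        moreover have "set ?ys' - {b} = set (a # rr)" using dys' by auto
        moreover have "z (obar (oclass (a # rr))) = - real (deg X (set (a # rr)))"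
        proof -
          have o: "oclass (a # rr) \<in> OC" using oclass_ocells[OF br(2)] .
          have dar: "distinct (a # rr)" using br by (simp add: orderings_def)
          have oc: "ocell (obar (oclass (a # rr))) = set (a # rr)" using ocell_oclass[OF dar] oc_props[OF o] by simp
          have ne: "obar (oclass (a # rr)) \<noteq> oclass (a # rr)" using oc_props[OF o] by simp
          have r1: "ocell (obar (oclass (a # rr))) - rho = {a}" "rho \<subseteq> ocell (obar (oclass (a # rr)))"
            using abr oc unfolding rho_def by auto
          have oo: "obar (oclass (a # rr)) \<in> OC" using oc_props[OF o] by simp
          show ?thesis unfolding z_def using oo r1 oc ne by simp
        qed
        ultimately show ?thesis using deg_pos[OF cb(2)] by simp
      qed
      have "cobdry X d z (oclass ?ys') = (\<Sum>x\<in>set ?ys'. z (fc ?ys' x) / real (deg X (set ?ys' - {x})))"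
        using COB[OF ys' z_form] .
      also have "\<dots> = z (fc ?ys' a) / real (deg X (set ?ys' - {a})) + (z (fc ?ys' b) / real (deg X (set ?ys' - {b}))
          + (\<Sum>x\<in>rho. z (fc ?ys' x) / real (deg X (set ?ys' - {x}))))"
        using dys' unfolding rho_def by (simp add: sum.insert)
      also have "(\<Sum>x\<in>rho. z (fc ?ys' x) / real (deg X (set ?ys' - {x}))) = 0"
        using zero[OF ys'] unfolding rho_def by (intro sum.neutral) auto
      finally have "cobdry X d z (oclass ?ys') = 0" using ta tb by simp
      then show ?thesis using cs ys by simp
    qed
  qed
  then show ?thesis using z_form by (simp add: closed_forms_def)
qed

end


context cx0 begin

lemma maxdeg_ge: "c \<in> cells X j \<Longrightarrow> deg X c \<le> maxdeg X j"
  unfolding maxdeg_def using finX by (intro Max_ge) (auto simp: cells_def)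

lemma ip_ind1_z: "ip (ind1 S0) z = 1"
proof -
  let ?c0 = "ocell S0"
  have c0: "?c0 \<in> C" using ocell_ocells S0 by blast
  have o: "obar S0 \<in> OC" "obar (obar S0) = S0" "obar S0 \<noteq> S0" using oc_props[OF S0] by auto
  have zo: "z (obar S0) = - z S0" using z_form S0 by (simp add: forms_def)
  have t: "ind1 S0 (pc c) * z (pc c) / real (deg X c) = (if c = ?c0 then 1 else 0)"
    if c: "c \<in> C" for c
  proof -
    have pc: "pc c \<in> OC" "ocell (pc c) = c" using pc_oc[OF SC c] by auto
    show ?thesis
    proof (cases "c = ?c0")
      case True
      then have "pc c = S0 \<or> pc c = obar S0" using ocell_cases[OF S0 pc(1) d1] pc by simp
      then show ?thesis using True o zo z_S0 deg_pos[OF c0] by (auto simp: ind1_def)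
    next
      case False
      then have "pc c \<noteq> S0" "pc c \<noteq> obar S0" using pc oc_props[OF S0] by auto
      then show ?thesis using False by (simp add: ind1_def)
    qed
  qed
  have "ip (ind1 S0) z = (\<Sum>c\<in>C. (if c = ?c0 then 1 else 0))"
    unfolding ip_def using t by (intro sum.cong) auto
  also have "\<dots> = 1" using c0 finC by simp
  finally show ?thesis .
qed

lemma ip_zz_pos: "ip z z > 0"
proof -
  have "ip z z \<noteq> 0" using ip_zero[OF z_form] z_nz by blast
  then show ?thesis using ip_nonneg[of z] by simp
qed

lemma rho_cell: "rho \<in> cells X (d - 2)"
proof -
  have "rho \<subseteq> set s0" using s0_props by auto
  moreover have "set s0 \<in> X" using s0 by (simp add: orderings_def)
  ultimately have "rho \<in> X" using X_sub by blast
  then show ?thesis using s0_props d2 by (simp add: cells_def)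
qed

lemma ip_zz_le: "ip z z \<le> real (maxdeg X (d - 2)) * real (maxdeg X (d - 1))"
proof -
  let ?K1 = "real (maxdeg X (d - 1))"
  have t: "z (pc c) * z (pc c) / real (deg X c) = (if rho \<subseteq> c then real (deg X c) else 0)" if c: "c \<in> C" for c
  proof -
    have pc: "pc c \<in> OC" "ocell (pc c) = c" using pc_oc[OF SC c] by auto
    have dp: "deg X c > 0" using deg_pos[OF c] .
    show ?thesis using pc dp by (auto simp: z_def)
  qed
  have "ip z z = (\<Sum>c\<in>C. (if rho \<subseteq> c then real (deg X c) else 0))"
    unfolding ip_def using t by (intro sum.cong) auto
  also have "\<dots> = (\<Sum>c\<in>{c\<in>C. rho \<subseteq> c}. real (deg X c))"
    using finC by (simp add: sum.inter_filter)
  also have "\<dots> \<le> (\<Sum>c\<in>{c\<in>C. rho \<subseteq> c}. ?K1)"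
    using maxdeg_ge by (intro sum_mono) auto
  also have "\<dots> = real (card {c\<in>C. rho \<subseteq> c}) * ?K1" by simp
  also have "card {c\<in>C. rho \<subseteq> c} = deg X rho"
  proof -
    have "{c\<in>C. rho \<subseteq> c} = {t \<in> X. rho \<subseteq> t \<and> card t = card rho + 1}"
      using s0_props d2 by (auto simp: cells_def)
    then show ?thesis by (simp add: deg_def)
  qed
  also have "real (deg X rho) * ?K1 \<le> real (maxdeg X (d - 2)) * ?K1"
    using maxdeg_ge[OF rho_cell] by (intro mult_right_mono) auto
  finally show ?thesis .
qed

lemma Az: "0 \<le> p \<Longrightarrow> p < 1 \<Longrightarrow> Aop X d p z = (\<lambda>S. cc p * z S)"
  using closed_iff[OF z_form] z_closed by blast

lemma iter_z:
  fixes f :: "'a list set \<Rightarrow> real"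
  assumes f: "f \<in> forms X (d - 1)" and p: "0 \<le> p" "p < 1"
  shows "ip ((Aop X d p ^^ n) f) z = (cc p)^n * ip f z"
proof (induction n)
  case 0 then show ?case by simp
next
  case (Suc n)
  have "ip ((Aop X d p ^^ Suc n) f) z = ip ((Aop X d p ^^ n) f) (Aop X d p z)"
    using SA[OF iter_form[OF f] z_form] by simp
  also have "\<dots> = cc p * ip ((Aop X d p ^^ n) f) z" unfolding Az[OF p] ip_scale2 ..
  finally show ?case using Suc by simp
qed

lemma lower:
  assumes p: "0 \<le> p" "p < 1"
  shows "1 / sqrt (real (maxdeg X (d - 2)) * real (maxdeg X (d - 1))) * (cc p)^n
    \<le> fnorm X d (Eproc X d p S0 n)"
proof -
  let ?E = "Eproc X d p S0 n"
  let ?KK = "real (maxdeg X (d - 2)) * real (maxdeg X (d - 1))"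
  have E: "?E = (Aop X d p ^^ n) (ind1 S0)" using E_iter[OF S0] .
  have Ef: "?E \<in> forms X (d - 1)" unfolding E using iter_form[OF ind1_form[OF S0]] .
  have i: "ip ?E z = (cc p)^n" unfolding E using iter_z[OF ind1_form[OF S0] p] ip_ind1_z by simp
  have "(ip ?E z)^2 \<le> ip ?E ?E * ip z z" using CS[OF ip_zz_pos] .
  then have "((cc p)^n)^2 \<le> ip ?E ?E * ip z z" using i by simp
  then have "sqrt (((cc p)^n)^2) \<le> sqrt (ip ?E ?E * ip z z)" by (rule real_sqrt_le_mono)
  moreover have "sqrt (((cc p)^n)^2) = (cc p)^n" using cc_pos[OF p] by simp
  moreover have "sqrt (ip ?E ?E * ip z z) = fnorm X d ?E * sqrt (ip z z)"
    by (simp add: fnorm_ip real_sqrt_mult ip_nonneg)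
  ultimately have 1: "(cc p)^n \<le> fnorm X d ?E * sqrt (ip z z)" by simp
  have 2: "sqrt (ip z z) \<le> sqrt ?KK" using ip_zz_le by (rule real_sqrt_le_mono)
  have KK: "sqrt ?KK > 0" using ip_zz_pos ip_zz_le by simp
  have fn: "fnorm X d ?E \<ge> 0" by (simp add: fnorm_ip ip_nonneg)
  have "(cc p)^n \<le> fnorm X d ?E * sqrt ?KK"
    using 1 mult_left_mono[OF 2 fn] by linarith
  then show ?thesis using KK by (simp add: field_simps)
qed

lemma upper:
  assumes p: "0 \<le> p" "p < 1"
  shows "fnorm X d (Eproc X d p S0 n) \<le> (max \<bar>2 * p - 1\<bar> (cc p))^n"
proof -
  let ?E = "Eproc X d p S0 n"
  let ?r = "max \<bar>2 * p - 1\<bar> (cc p)"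
  have E: "?E = (Aop X d p ^^ n) (ind1 S0)" using E_iter[OF S0] .
  have "ip ?E ?E \<le> (?r^2)^n * ip (ind1 S0) (ind1 S0)"
    unfolding E using iter_contract[OF ind1_form[OF S0] p] .
  also have "\<dots> \<le> (?r^2)^n * 1" using ip_ind1[OF S0] by (intro mult_left_mono) auto
  finally have "ip ?E ?E \<le> (?r^n)^2" by (simp add: power_mult[symmetric] power_mult_distrib mult.commute)
  then have "sqrt (ip ?E ?E) \<le> sqrt ((?r^n)^2)" by (rule real_sqrt_le_mono)
  moreover have "?r \<ge> 0" by simp
  ultimately show ?thesis by (simp add: fnorm_ip)
qed

end


context cx begin

lemma G:
  assumes ys: "ys \<in> orderings X d" and x: "x \<in> set ys"
  shows "oclass (x # orep (fc ys x)) = oclass ys" "x \<in> cone (orep (fc ys x))"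
proof -
  let ?S = "fc ys x"
  have So: "?S \<in> OC" using fc_oc[OF SC ys d2 x] by simp
  have s: "orep ?S \<in> orderings X (d - 1)" "oclass (orep ?S) = ?S" using orep_ord[OF So] by auto
  have dy: "distinct ys" "length ys = d + 1" "set ys \<in> X" using ys by (auto simp: orderings_def)
  have oc: "ocell ?S = set ys - {x}" using ocell_fc[OF dy(1) _ x] dy d2 by simp
  have ss: "set (orep ?S) = set ys - {x}" using oc unfolding ocell_def .
  have ds: "distinct (orep ?S)" "length (orep ?S) = d" using s d2 by (auto simp: orderings_def)
  have dz: "distinct (x # orep ?S)" using ds ss by simp
  have dl: "dl ys (x # orep ?S)" using dz ss dy x by (auto simp: dl_def)
  have l3: "length ys \<ge> 3" using dy d2 by simp
  have h: "fc (x # orep ?S) x = ?S" using fc_hd[OF dz] ds d2 s by simp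
  have e: "fc (x # orep ?S) x = (if po ys (x # orep ?S) then fc ys x else obar (fc ys x))"
    by (rule F1fc[OF dl l3 x])
  have po: "po ys (x # orep ?S)"
  proof (rule ccontr)
    assume "\<not> po ys (x # orep ?S)"
    then have "?S = obar ?S" using e h by simp
    then show False using oc_props[OF So] by simp
  qed
  show "oclass (x # orep ?S) = oclass ys"
    using oclass_eq_iff[OF dy(1) dz] dl po by (simp add: dl_def)
  show "x \<in> cone (orep ?S)" unfolding cone_def using ss dy x by (auto simp: insert_absorb)
qed

lemma D_xor: "disorientation X d D \<Longrightarrow> xs \<in> orderings X d \<Longrightarrow> (oclass xs \<in> D) \<noteq> (oclass (flip xs) \<in> D)"
  by (simp add: disorientation_def)

lemma flip_ord: "xs \<in> orderings X j \<Longrightarrow> flip xs \<in> orderings X j"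
  by (auto simp: orderings_def distinct_flip length_flip set_flip)

lemma obar_flip_d: "xs \<in> orderings X d \<Longrightarrow> oclass (flip xs) = obar (oclass xs)"
proof -
  assume "xs \<in> orderings X d"
  then have "distinct xs" "2 \<le> length xs" using d2 by (auto simp: orderings_def)
  then show ?thesis using obar_oclass by metis
qed

lemma cons_D1:
  assumes D: "disorientation X d D" and S: "S \<in> OC"
    and v: "v \<in> cone (orep S)" and w: "w \<in> cone (orep S)"
    and vD: "oclass (v # orep S) \<in> D"
  shows "oclass (w # orep S) \<in> D"
proof (rule ccontr)
  assume wD: "oclass (w # orep S) \<notin> D"
  let ?s = "orep S"
  have s: "?s \<in> orderings X (d - 1)" "oclass ?s = S" using orep_ord[OF S] by auto
  have ds: "distinct ?s" "length ?s = d" using s d2 by (auto simp: orderings_def)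
  obtain a s' where as: "?s = a # s'" using ds d2 by (cases ?s) auto
  have vw: "v \<noteq> w" using vD wD by auto
  have xo: "v # ?s \<in> orderings X d" using ord_cone[OF s(1) v] .
  have wo: "w # ?s \<in> orderings X d" using ord_cone[OF s(1) w] .
  have yo: "flip (w # ?s) \<in> orderings X d" using flip_ord[OF wo] .
  have yD: "oclass (flip (w # ?s)) \<in> D" using D_xor[OF D wo] wD by simp
  have fy: "flip (w # ?s) = a # w # s'" using as by simp
  have vs: "v \<notin> set ?s" "w \<notin> set ?s" using v w by (auto simp: cone_def)
  have sxy: "set (v # ?s) \<inter> set (flip (w # ?s)) = set ?s" using vs vw by (auto simp: set_flip)
  have ne: "set (v # ?s) \<noteq> set (flip (w # ?s))" using vs vw by (auto simp: set_flip)
  have card: "card (set (v # ?s) \<inter> set (flip (w # ?s))) = d" using sxy ds by (simp add: distinct_card)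
  have d0: "set (del 0 (v # ?s)) = set (v # ?s) \<inter> set (flip (w # ?s))" using sxy by simp
  have d1': "set (del 1 (flip (w # ?s))) = set (v # ?s) \<inter> set (flip (w # ?s))" using sxy fy as by (simp add: del_def)
  have cond: "\<forall>xs \<in> orderings X d. \<forall>ys \<in> orderings X d. oclass xs \<in> D \<longrightarrow> oclass ys \<in> D \<longrightarrow>
        set xs \<noteq> set ys \<longrightarrow> card (set xs \<inter> set ys) = d \<longrightarrow>
        (\<forall>i < d + 1. \<forall>k < d + 1. set (del i xs) = set xs \<inter> set ys \<longrightarrow>
            set (del k ys) = set xs \<inter> set ys \<longrightarrow> ind_face xs i = ind_face ys k)"
    using D unfolding disorientation_def by blast
  have i01: "(0::nat) < d + 1" "(1::nat) < d + 1" using d2 by auto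
  have "ind_face (v # ?s) 0 = ind_face (flip (w # ?s)) 1"
    using cond[rule_format, OF xo yo vD yD ne card i01(1) i01(2) d0 d1'] .
  moreover have "ind_face (v # ?s) 0 = S" using s by (simp add: ind_face_def)
  moreover have "ind_face (flip (w # ?s)) 1 = obar S"
    using fy as s by (simp add: ind_face_def del_def)
  ultimately show False using oc_props[OF S] by simp
qed

lemma cons_D:
  assumes D: "disorientation X d D" and S: "S \<in> OC"
    and v: "v \<in> cone (orep S)" and w: "w \<in> cone (orep S)"
  shows "(oclass (v # orep S) \<in> D) = (oclass (w # orep S) \<in> D)"
  using cons_D1[OF D S v w] cons_D1[OF D S w v] by blast

definition eps :: "'a list set set \<Rightarrow> 'a list set \<Rightarrow> bool" where
  "eps D S = (\<exists>v\<in>cone (orep S). oclass (v # orep S) \<in> D)"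

lemma eps_iff: "disorientation X d D \<Longrightarrow> S \<in> OC \<Longrightarrow> v \<in> cone (orep S) \<Longrightarrow> eps D S = (oclass (v # orep S) \<in> D)"
  unfolding eps_def using cons_D by blast

lemma cone_ne: "S \<in> OC \<Longrightarrow> \<exists>v. v \<in> cone (orep S)"
proof -
  assume S: "S \<in> OC"
  have s: "orep S \<in> orderings X (d - 1)" using orep_ord[OF S] by auto
  have c: "set (orep S) \<in> C" using ocell_ocells[OF S] unfolding ocell_def .
  have "card (cone (orep S)) > 0" using cone_card[OF s] deg_pos[OF c] by simp
  then show ?thesis by (metis card_gt_0_iff ex_in_conv)
qed

lemma g_val:
  assumes D: "disorientation X d D" and S: "S \<in> OC"
  shows "bdry X d (disor_form X d D) S = (if eps D S then 1 else -1) * real (deg X (ocell S))"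
proof -
  let ?s = "orep S"
  have s: "?s \<in> orderings X (d - 1)" using orep_ord[OF S] by auto
  have cs: "{v. v \<notin> ocell S \<and> insert v (ocell S) \<in> X} = cone ?s" unfolding cone_def ocell_def ..
  have t: "disor_form X d D (oclass (v # ?s)) = (if eps D S then 1 else -1)" if v: "v \<in> cone ?s" for v
  proof -
    have "oclass (v # ?s) \<in> ocells X d" using oclass_ocells[OF ord_cone[OF s v]] .
    then show ?thesis using eps_iff[OF D S v] by (simp add: disor_form_def)
  qed
  have "bdry X d (disor_form X d D) S = (\<Sum>v\<in>cone ?s. disor_form X d D (oclass (v # ?s)))"
    using S cs by (simp add: bdry_def)
  also have "\<dots> = (\<Sum>v\<in>cone ?s. (if eps D S then 1 else -1))" using t by (intro sum.cong) auto
  also have "\<dots> = real (card (cone ?s)) * (if eps D S then 1 else -1)" by simp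
  also have "card (cone ?s) = deg X (ocell S)" using cone_card[OF s] unfolding ocell_def .
  finally show ?thesis by simp
qed

lemma eps_flip:
  assumes D: "disorientation X d D" and S: "S \<in> OC" and v: "v \<in> cone (orep S)" and x: "x \<in> set (flip (v # orep S))"
  shows "eps D (fc (flip (v # orep S)) x) = (\<not> oclass (v # orep S) \<in> D)"
proof -
  let ?s = "orep S"
  have s: "?s \<in> orderings X (d - 1)" using orep_ord[OF S] by auto
  have xo: "v # ?s \<in> orderings X d" using ord_cone[OF s v] .
  have yo: "flip (v # ?s) \<in> orderings X d" using flip_ord[OF xo] .
  have S': "fc (flip (v # ?s)) x \<in> OC" using fc_oc[OF SC yo d2 x] by simp
  have g: "oclass (x # orep (fc (flip (v # ?s)) x)) = oclass (flip (v # ?s))" "x \<in> cone (orep (fc (flip (v # ?s)) x))"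
    using G[OF yo x] by auto
  show ?thesis using eps_iff[OF D S' g(2)] g(1) D_xor[OF D xo] by simp
qed

lemma eps_obar:
  assumes D: "disorientation X d D" and S: "S \<in> OC"
  shows "eps D (obar S) = (\<not> eps D S)"
proof -
  let ?s = "orep S"
  obtain v where v: "v \<in> cone ?s" using cone_ne[OF S] by blast
  have s: "?s \<in> orderings X (d - 1)" "oclass ?s = S" using orep_ord[OF S] by auto
  have xo: "v # ?s \<in> orderings X d" using ord_cone[OF s(1) v] .
  have dx: "distinct (v # ?s)" "length (v # ?s) \<ge> 3" using xo d2 by (auto simp: orderings_def)
  have fp: "dl (v # ?s) (flip (v # ?s))" "\<not> po (v # ?s) (flip (v # ?s))" using flip_po[OF dx(1)] dx(2) by auto
  have vin: "v \<in> set (v # ?s)" by simp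
  have "fc (flip (v # ?s)) v = obar (fc (v # ?s) v)" using F1fc[OF fp(1) dx(2) vin] fp(2) by simp
  also have "fc (v # ?s) v = S" using fc_hd[OF dx(1)] dx s by simp
  finally have e: "fc (flip (v # ?s)) v = obar S" .
  have "eps D (fc (flip (v # ?s)) v) = (\<not> oclass (v # ?s) \<in> D)"
    using eps_flip[OF D S v] by (simp add: set_flip)
  then show ?thesis using e eps_iff[OF D S v] by simp
qed

lemma eps_nb:
  assumes D: "disorientation X d D" and S: "S \<in> OC" and S': "S' \<in> N S"
  shows "eps D S' = (\<not> eps D S)"
proof -
  let ?s = "orep S"
  have s: "?s \<in> orderings X (d - 1)" "oclass ?s = S" using orep_ord[OF S] by auto
  obtain v x where vx: "v \<in> cone ?s" "x \<in> set ?s" "S' = obar (fc (v # ?s) x)"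
    using S' unfolding nbr_char[OF s(1), unfolded s(2)] by auto
  have xo: "v # ?s \<in> orderings X d" using ord_cone[OF s(1) vx(1)] .
  have dx: "distinct (v # ?s)" "length (v # ?s) \<ge> 3" using xo d2 by (auto simp: orderings_def)
  have fp: "dl (v # ?s) (flip (v # ?s))" "\<not> po (v # ?s) (flip (v # ?s))" using flip_po[OF dx(1)] dx(2) by auto
  have xin: "x \<in> set (v # ?s)" using vx by simp
  have "fc (flip (v # ?s)) x = S'" using F1fc[OF fp(1) dx(2) xin] fp(2) vx by simp
  moreover have "eps D (fc (flip (v # ?s)) x) = (\<not> oclass (v # ?s) \<in> D)"
    using eps_flip[OF D S vx(1)] xin by (simp add: set_flip)
  ultimately show ?thesis using eps_iff[OF D S vx(1)] by simp
qed

lemma card_N: "S \<in> OC \<Longrightarrow> card (N S) = d * deg X (ocell S)"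
proof -
  assume S: "S \<in> OC"
  have s: "orep S \<in> orderings X (d - 1)" "oclass (orep S) = S" using orep_ord[OF S] by auto
  have "card (N S) = card (cone (orep S) \<times> set (orep S))"
    using card_image[OF nbr_inj[OF s(1)]] nbr_char[OF s(1)] s(2) by simp
  also have "\<dots> = deg X (ocell S) * d"
    using cone_card[OF s(1)] s(1) d2 by (simp add: card_cartesian_product ocell_def orderings_def distinct_card)
  finally show ?thesis by simp
qed

lemma disor_eig:
  assumes D: "disorientation X d D" and S0: "S0 \<in> OC"
  shows "(let g = bdry X d (disor_form X d D) in
           g \<in> forms X (d - 1) \<and> g \<noteq> (\<lambda>_. 0) \<and> Aop X d p g = (\<lambda>S. (2 * p - 1) * g S))"
proof -
  define g where "g = bdry X d (disor_form X d D)"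
  have gv: "g S = (if eps D S then 1 else -1) * real (deg X (ocell S))" if "S \<in> OC" for S
    using g_val[OF D that] unfolding g_def .
  have g0: "g S = 0" if "S \<notin> OC" for S using that unfolding g_def by (simp add: bdry_def)
  have gf: "g \<in> forms X (d - 1)"
  proof -
    have "g (obar S) = - g S" if S: "S \<in> OC" for S
      using gv[OF S] gv[of "obar S"] oc_props[OF S] eps_obar[OF D S] by auto
    then show ?thesis using g0 by (simp add: forms_def)
  qed
  have gnz: "g \<noteq> (\<lambda>_. 0)"
  proof
    assume "g = (\<lambda>_. 0)"
    then have "g S0 = 0" by simp
    moreover have "ocell S0 \<in> C" using ocell_ocells[OF S0] .
    then have "deg X (ocell S0) > 0" using deg_pos by blast
    ultimately show False using gv[OF S0] by (cases "eps D S0") auto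
  qed
  have Ag: "Aop X d p g S = (2 * p - 1) * g S" for S
  proof (cases "S \<in> OC")
    case False then show ?thesis using g0 by (simp add: Aop_real)
  next
    case True
    define sg where "sg = (if eps D S then 1 else -1 :: real)"
    have t: "g S' / real (deg X (ocell S')) = - sg" if S': "S' \<in> N S" for S'
    proof -
      have o: "S' \<in> OC" using S' nbr_OC by simp
      have c: "ocell S' \<in> C" using ocell_ocells[OF o] .
      show ?thesis using gv[OF o] eps_nb[OF D True S'] deg_pos[OF c] unfolding sg_def by auto
    qed
    have "M g S = (\<Sum>S'\<in>N S. - sg)" unfolding M_def using t by (intro sum.cong) auto
    also have "\<dots> = - sg * real (d * deg X (ocell S))" using card_N[OF True] by simp
    finally have M: "M g S = - sg * real (d * deg X (ocell S))" .
    have "Aop X d p g S = p * (sg * real (deg X (ocell S))) + (1 - p) / real d * (- sg * real (d * deg X (ocell S)))"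
      using True gv[OF True] M unfolding sg_def by (simp add: Aop_real)
    also have "\<dots> = (2 * p - 1) * (sg * real (deg X (ocell S)))" using d2 by (simp add: field_simps)
    finally show ?thesis using gv[OF True] unfolding sg_def by simp
  qed
  show ?thesis unfolding g_def[symmetric] Let_def using gf gnz Ag by auto
qed

end


theorem mainTheorem2:
  fixes X :: "'a set set" and d :: nat and p :: real and S0 :: "'a list set"
  assumes "d \<ge> 2" and "0 \<le> p" and "p < 1"
    and "finite X" and "is_d_complex X d" and "uniform X d"
    and "S0 \<in> ocells X (d - 1)"
  shows
    "(\<forall>f \<in> forms X (d - 1). Aop X d p f =
        (\<lambda>S. ((p * (real d - 1) + 1) / real d) * f S - ((1 - p) / real d) * Lup X d f S))
     \<and> Eproc X d p S0 0 = ind1 S0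
     \<and> (\<forall>n. Eproc X d p S0 n = (Aop X d p ^^ n) (Eproc X d p S0 0)
           \<and> Eproc X d p S0 n = (Aop X d p ^^ n) (ind1 S0))
     \<and> (\<forall>(\<mu>::complex) f. f \<in> forms X (d - 1) \<and> f \<noteq> (\<lambda>_. 0) \<and> Aop X d p f = (\<lambda>S. \<mu> * f S) \<longrightarrow>
        Im \<mu> = 0 \<and> 2 * p - 1 \<le> Re \<mu> \<and> Re \<mu> \<le> (p * (real d - 1) + 1) / real d)
     \<and> (\<exists>f \<in> forms X (d - 1). f \<noteq> (\<lambda>_. 0) \<and>
          Aop X d p f = (\<lambda>S. ((p * (real d - 1) + 1) / real d) * f S))
     \<and> {f \<in> forms X (d - 1). Aop X d p f = (\<lambda>S. ((p * (real d - 1) + 1) / real d) * f S)}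
          = closed_forms X d
     \<and> (connected_d1 X d \<and> disorientable X d \<longrightarrow>
          (\<forall>D. disorientation X d D \<longrightarrow>
             (let g = bdry X d (disor_form X d D) in
               g \<in> forms X (d - 1) \<and> g \<noteq> (\<lambda>_. 0) \<and>
               Aop X d p g = (\<lambda>S. (2 * p - 1) * g S))))
     \<and> (\<forall>n. 1 / sqrt (real (maxdeg X (d - 2)) * real (maxdeg X (d - 1)))
            * ((p * (real d - 1) + 1) / real d) ^ n \<le> fnorm X d (Eproc X d p S0 n)
         \<and> fnorm X d (Eproc X d p S0 n)
            \<le> (max \<bar>2 * p - 1\<bar> ((p * (real d - 1) + 1) / real d)) ^ n)"
proof -
  have sc: "simplicial_complex X" using assms(5) by (simp add: is_d_complex_def)
  interpret cx0 X d S0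
    by unfold_locales (use assms sc in auto)
  have p: "0 \<le> p" "p < 1" using assms by auto
  have ccd: "cc p = (p * (real d - 1) + 1) / real d" by (simp add: cc_def)
  have c1: "\<forall>f \<in> forms X (d - 1). Aop X d p f =
        (\<lambda>S. ((p * (real d - 1) + 1) / real d) * f S - ((1 - p) / real d) * Lup X d f S)"
    using part1 ccd by simp
  have c2: "Eproc X d p S0 0 = ind1 S0" using E0[OF S0] .
  have c3: "\<forall>n. Eproc X d p S0 n = (Aop X d p ^^ n) (Eproc X d p S0 0)
           \<and> Eproc X d p S0 n = (Aop X d p ^^ n) (ind1 S0)"
    using E_iter[OF S0] c2 by simp
  have c4: "\<forall>(\<mu>::complex) f. f \<in> forms X (d - 1) \<and> f \<noteq> (\<lambda>_. 0) \<and> Aop X d p f = (\<lambda>S. \<mu> * f S) \<longrightarrow>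
        Im \<mu> = 0 \<and> 2 * p - 1 \<le> Re \<mu> \<and> Re \<mu> \<le> (p * (real d - 1) + 1) / real d"
    using complex_eig[OF _ _ _ p] ccd by metis
  have c5: "\<exists>f \<in> forms X (d - 1). f \<noteq> (\<lambda>_. 0) \<and>
          Aop X d p f = (\<lambda>S. ((p * (real d - 1) + 1) / real d) * f S)"
    using z_form z_nz Az[OF p] ccd by metis
  have c6: "{f \<in> forms X (d - 1). Aop X d p f = (\<lambda>S. ((p * (real d - 1) + 1) / real d) * f S)}
          = closed_forms X d"
    using closed_iff[OF _ p] ccd by (auto simp: closed_forms_def)
  have c7: "connected_d1 X d \<and> disorientable X d \<longrightarrow>
          (\<forall>D. disorientation X d D \<longrightarrow>
             (let g = bdry X d (disor_form X d D) in
               g \<in> forms X (d - 1) \<and> g \<noteq> (\<lambda>_. 0) \<and>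
               Aop X d p g = (\<lambda>S. (2 * p - 1) * g S)))"
    using disor_eig[OF _ S0] by blast
  have c8: "\<forall>n. 1 / sqrt (real (maxdeg X (d - 2)) * real (maxdeg X (d - 1)))
            * ((p * (real d - 1) + 1) / real d) ^ n \<le> fnorm X d (Eproc X d p S0 n)
         \<and> fnorm X d (Eproc X d p S0 n)
            \<le> (max \<bar>2 * p - 1\<bar> ((p * (real d - 1) + 1) / real d)) ^ n"
    using lower[OF p] upper[OF p] ccd by simp
  show ?thesis using c1 c2 c3 c4 c5 c6 c7 c8 by blast
qed


end
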